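(* Let $K:X\times X\to\mathbb{C}$ be positive definite and assume $\delta_x\in\mathscr{H}(K)$ for all $x\in X$. Then a function $h$ on $X$ belongs to $\mathscr{H}(K)$ if and only if $\sup_F\|K_F^{-1/2}h_F\|_{\ell^2(F)}<\infty$, the supremum over all finite subsets $F\subset X$, where $h_F=h|_F$ and $K_F=(K(x,y))_{x,y\in F}$. If $h\in\mathscr{H}(K)$, then $\|h\|^2_{\mathscr{H}(K)}=\sup_F\|K_F^{-1/2}h_F\|^2_{\ell^2(F)}$.
   Context: $\delta_x$ is the function on $X$ equal to $1$ at $x$ and $0$ elsewhere; $\mathscr{H}(K)$ is the reproducing kernel Hilbert space of $K$ (completion of span of $K(\cdot,x)$, $\langle K(\cdot,x),K(\cdot,y)\rangle=K(x,y)$, $\langle K(\cdot,x),h\rangle=h(x)$). Under the assumption, each $K_F$ is a positive invertible matrix and $K_F^{-1/2}$ is defined by the spectral theorem. *)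

theory Defs
  imports "HOL-Analysis.Analysis"
begin

definition qform :: "('a \<Rightarrow> 'a \<Rightarrow> complex) \<Rightarrow> 'a set \<Rightarrow> ('a \<Rightarrow> complex) \<Rightarrow> complex" where
  "qform A F c = (\<Sum>x\<in>F. \<Sum>y\<in>F. cnj (c x) * c y * A x y)"

definition pos_def_kernel :: "('a \<Rightarrow> 'a \<Rightarrow> complex) \<Rightarrow> bool" where
  "pos_def_kernel K \<longleftrightarrow>
     (\<forall>F c. finite F \<longrightarrow> Im (qform K F c) = 0 \<and> Re (qform K F c) \<ge> 0)"

text \<open>Elements of span{K(.,x)} are represented by finitely supported
  coefficient functions c; the represented function is
  y \<mapsto> sum_x c x * K y x, and its squared norm is qform K (support) c,
  since <K(.,x),K(.,y)> = K(x,y).\<close>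
definition fin_supp :: "('a \<Rightarrow> complex) \<Rightarrow> bool" where
  "fin_supp c \<longleftrightarrow> finite {x. c x \<noteq> 0}"

definition span_fun :: "('a \<Rightarrow> 'a \<Rightarrow> complex) \<Rightarrow> ('a \<Rightarrow> complex) \<Rightarrow> 'a \<Rightarrow> complex" where
  "span_fun K c = (\<lambda>y. \<Sum>x\<in>{x. c x \<noteq> 0}. c x * K y x)"

definition span_norm2 :: "('a \<Rightarrow> 'a \<Rightarrow> complex) \<Rightarrow> ('a \<Rightarrow> complex) \<Rightarrow> real" where
  "span_norm2 K c = Re (qform K {x. c x \<noteq> 0} c)"

text \<open>A sequence in the span that is Cauchy in the kernel norm and converges
  pointwise to h (completion of the span realised as functions on X).\<close>
definition approx_seq :: "('a \<Rightarrow> 'a \<Rightarrow> complex) \<Rightarrow> (nat \<Rightarrow> 'a \<Rightarrow> complex) \<Rightarrow> ('a \<Rightarrow> complex) \<Rightarrow> bool" where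
  "approx_seq K c h \<longleftrightarrow>
     (\<forall>n. fin_supp (c n)) \<and>
     (\<forall>e>0. \<exists>N. \<forall>m\<ge>N. \<forall>n\<ge>N. span_norm2 K (\<lambda>x. c m x - c n x) < e) \<and>
     (\<forall>y. (\<lambda>n. span_fun K (c n) y) \<longlonglongrightarrow> h y)"

definition in_rkhs :: "('a \<Rightarrow> 'a \<Rightarrow> complex) \<Rightarrow> ('a \<Rightarrow> complex) \<Rightarrow> bool" where
  "in_rkhs K h \<longleftrightarrow> (\<exists>c. approx_seq K c h)"

text \<open>The RKHS norm: limit of the norms of an approximating sequence
  (independent of the chosen sequence).\<close>
definition rkhs_norm :: "('a \<Rightarrow> 'a \<Rightarrow> complex) \<Rightarrow> ('a \<Rightarrow> complex) \<Rightarrow> real" where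
  "rkhs_norm K h = lim (\<lambda>n. sqrt (span_norm2 K ((SOME c. approx_seq K c h) n)))"

definition delta :: "'a \<Rightarrow> 'a \<Rightarrow> complex" where
  "delta x = (\<lambda>y. if y = x then 1 else 0)"

definition mat_mult_on :: "'a set \<Rightarrow> ('a \<Rightarrow> 'a \<Rightarrow> complex) \<Rightarrow> ('a \<Rightarrow> 'a \<Rightarrow> complex) \<Rightarrow> 'a \<Rightarrow> 'a \<Rightarrow> complex" where
  "mat_mult_on F A B = (\<lambda>x y. \<Sum>z\<in>F. A x z * B z y)"

definition mat_vec_on :: "'a set \<Rightarrow> ('a \<Rightarrow> 'a \<Rightarrow> complex) \<Rightarrow> ('a \<Rightarrow> complex) \<Rightarrow> 'a \<Rightarrow> complex" where
  "mat_vec_on F A v = (\<lambda>x. \<Sum>y\<in>F. A x y * v y)"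

definition psd_on :: "'a set \<Rightarrow> ('a \<Rightarrow> 'a \<Rightarrow> complex) \<Rightarrow> bool" where
  "psd_on F B \<longleftrightarrow> (\<forall>x\<in>F. \<forall>y\<in>F. B x y = cnj (B y x)) \<and>
     (\<forall>c. Im (qform B F c) = 0 \<and> Re (qform B F c) \<ge> 0)"

text \<open>K_F^{-1/2}: the unique positive semidefinite F\<times>F matrix B with
  B B K_F = I, i.e. the positive square root of K_F^{-1} (spectral theorem).\<close>
definition inv_sqrt_on :: "('a \<Rightarrow> 'a \<Rightarrow> complex) \<Rightarrow> 'a set \<Rightarrow> 'a \<Rightarrow> 'a \<Rightarrow> complex" where
  "inv_sqrt_on K F = (THE B. (\<forall>x y. (x \<notin> F \<or> y \<notin> F) \<longrightarrow> B x y = 0) \<and> psd_on F B \<and>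
      (\<forall>x\<in>F. \<forall>y\<in>F. mat_mult_on F (mat_mult_on F B B) K x y = (if x = y then 1 else 0)))"

definition l2_norm_on :: "'a set \<Rightarrow> ('a \<Rightarrow> complex) \<Rightarrow> real" where
  "l2_norm_on F v = sqrt (\<Sum>x\<in>F. (cmod (v x))\<^sup>2)"

end

theory Submission
  imports Defs
begin


definition sq :: "('a \<Rightarrow> 'a \<Rightarrow> complex) \<Rightarrow> 'a set \<Rightarrow> ('a \<Rightarrow> complex) \<Rightarrow> ('a \<Rightarrow> complex) \<Rightarrow> complex" where
  "sq M F x y = (\<Sum>a\<in>F. \<Sum>b\<in>F. cnj (x a) * y b * M a b)"

definition herm :: "'a set \<Rightarrow> ('a \<Rightarrow> 'a \<Rightarrow> complex) \<Rightarrow> bool" where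
  "herm F M \<longleftrightarrow> (\<forall>a\<in>F. \<forall>b\<in>F. M a b = cnj (M b a))"

definition ip :: "'a set \<Rightarrow> ('a \<Rightarrow> complex) \<Rightarrow> ('a \<Rightarrow> complex) \<Rightarrow> complex" where
  "ip F x y = (\<Sum>a\<in>F. cnj (x a) * y a)"

lemma qform_sq: "qform M F c = sq M F c c"
  by (simp add: qform_def sq_def)

lemma sq_alt: "sq M F x y = ip F x (mat_vec_on F M y)"
  by (simp add: sq_def ip_def mat_vec_on_def sum_distrib_left mult_ac)

lemma sq_herm: assumes "herm F M" shows "sq M F y x = cnj (sq M F x y)"
proof -
  have "sq M F y x = (\<Sum>b\<in>F. \<Sum>a\<in>F. cnj (y a) * x b * M a b)"
    unfolding sq_def by (rule sum.swap)
  also have "\<dots> = (\<Sum>b\<in>F. \<Sum>a\<in>F. cnj (cnj (x b) * y a * M b a))"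
  proof (intro sum.cong refl)
    fix a b assume "a \<in> F" "b \<in> F"
    then have "M a b = cnj (M b a)" using assms unfolding herm_def by blast
    then show "cnj (y a) * x b * M a b = cnj (cnj (x b) * y a * M b a)" by simp
  qed
  also have "\<dots> = cnj (sq M F x y)"
    unfolding sq_def by simp
  finally show ?thesis .
qed

lemma sq_add_right: "sq M F x (\<lambda>a. y a + \<alpha> * z a) = sq M F x y + \<alpha> * sq M F x z"
  by (simp add: sq_def algebra_simps sum.distrib sum_distrib_left)

lemma sq_add_left: "sq M F (\<lambda>a. y a + \<alpha> * z a) x = sq M F y x + cnj \<alpha> * sq M F z x"
  by (simp add: sq_def algebra_simps sum.distrib sum_distrib_left)

lemma sq_diff_right: "sq M F x (\<lambda>a. y a - z a) = sq M F x y - sq M F x z"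
  by (simp add: sq_def algebra_simps sum.distrib sum_distrib_left sum_subtractf)

lemma sq_diff_left: "sq M F (\<lambda>a. y a - z a) x = sq M F y x - sq M F z x"
  by (simp add: sq_def algebra_simps sum.distrib sum_distrib_left sum_subtractf)

lemma sq_scale_right: "sq M F x (\<lambda>a. \<alpha> * z a) = \<alpha> * sq M F x z"
  by (simp add: sq_def algebra_simps sum_distrib_left)

lemma sq_scale_left: "sq M F (\<lambda>a. \<alpha> * z a) x = cnj \<alpha> * sq M F z x"
  by (simp add: sq_def algebra_simps sum_distrib_left)

lemma sq_cong: "(\<And>a. a \<in> F \<Longrightarrow> x a = x' a) \<Longrightarrow> (\<And>a. a \<in> F \<Longrightarrow> y a = y' a) \<Longrightarrow>
   sq M F x y = sq M F x' y'"
  by (simp add: sq_def)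

lemma cnj_mult_self: "cnj z * z = complex_of_real ((cmod z)^2)"
  by (metis complex_norm_square mult.commute of_real_power)

lemma quad_disc:
  fixes A B D :: real
  assumes "\<And>t. 0 \<le> A + 2 * t * B + t^2 * D" "0 \<le> D"
  shows "B^2 \<le> A * D"
proof (cases "D = 0")
  case True
  have "B = 0"
  proof (rule ccontr)
    assume "B \<noteq> 0"
    have "0 \<le> A + 2 * (-(A+1)/(2*B)) * B + (-(A+1)/(2*B))^2 * D" by (rule assms(1))
    also have "\<dots> = -1" using True \<open>B \<noteq> 0\<close> by (simp add: field_simps)
    finally show False by simp
  qed
  then show ?thesis using True by simp
next
  case False
  then have Dp: "D > 0" using assms(2) by simp
  have "0 \<le> A + 2 * (-B/D) * B + (-B/D)^2 * D" by (rule assms(1))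
  also have "\<dots> = A - B^2/D" using Dp by (simp add: field_simps power2_eq_square)
  finally have "B^2/D \<le> A" by simp
  then show ?thesis using Dp by (simp add: field_simps mult.commute)
qed

lemma cs_gen:
  assumes H: "herm F M"
    and V: "\<And>x y \<alpha>. x \<in> V \<Longrightarrow> y \<in> V \<Longrightarrow> (\<lambda>a. x a + \<alpha> * y a) \<in> V"
    and P: "\<And>x. x \<in> V \<Longrightarrow> 0 \<le> Re (sq M F x x)"
    and c: "c \<in> V" and d: "d \<in> V"
  shows "(cmod (sq M F c d))^2 \<le> Re (sq M F c c) * Re (sq M F d d)"
proof (cases "sq M F c d = 0")
  case True
  then show ?thesis using P c d by simp
next
  case False
  define s where "s = sq M F c d"
  have sn: "cmod s > 0" using False s_def by simp
  define A where "A = Re (sq M F c c)"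
  define D where "D = Re (sq M F d d)"
  have "0 \<le> A + 2 * t * cmod s + t^2 * D" for t :: real
  proof -
    define \<alpha> where "\<alpha> = complex_of_real t * cnj s / complex_of_real (cmod s)"
    have cs: "cnj s * s = complex_of_real ((cmod s)^2)"
      by (rule cnj_mult_self)
    have "\<alpha> * s = complex_of_real t * (cnj s * s) / complex_of_real (cmod s)"
      unfolding \<alpha>_def by (simp add: field_simps)
    also have "\<dots> = complex_of_real (t * cmod s)"
      using sn unfolding cs by (simp add: field_simps power2_eq_square)
    finally have as: "\<alpha> * s = complex_of_real (t * cmod s)" .
    have na: "cmod \<alpha> = abs t" using sn unfolding \<alpha>_def by (simp add: norm_divide norm_mult)
    have aa: "cnj \<alpha> * \<alpha> = complex_of_real (t^2)"
      using cnj_mult_self[of \<alpha>] na by simp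
    have dc: "sq M F d c = cnj s" unfolding s_def by (rule sq_herm[OF H])
    have "sq M F (\<lambda>a. c a + \<alpha> * d a) (\<lambda>a. c a + \<alpha> * d a)
        = sq M F c c + \<alpha> * s + cnj (\<alpha> * s) + (cnj \<alpha> * \<alpha>) * sq M F d d"
    proof -
      have "sq M F (\<lambda>a. c a + \<alpha> * d a) (\<lambda>a. c a + \<alpha> * d a)
          = (sq M F c c + \<alpha> * s) + cnj \<alpha> * (cnj s + \<alpha> * sq M F d d)"
        by (simp only: sq_add_left sq_add_right dc s_def[symmetric])
      then show ?thesis by (simp add: ring_distribs mult.assoc)
    qed
    then have "Re (sq M F (\<lambda>a. c a + \<alpha> * d a) (\<lambda>a. c a + \<alpha> * d a)) = A + 2 * t * cmod s + t^2 * D"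
      by (simp add: as aa A_def D_def)
    moreover have "0 \<le> Re (sq M F (\<lambda>a. c a + \<alpha> * d a) (\<lambda>a. c a + \<alpha> * d a))"
      using P V c d by blast
    ultimately show ?thesis by simp
  qed
  from quad_disc[OF this] have "(cmod s)^2 \<le> A * D" using P d D_def by blast
  then show ?thesis by (simp add: s_def A_def D_def)
qed

lemma kernel_gen:
  assumes H: "herm F M"
    and V: "\<And>x y \<alpha>. x \<in> V \<Longrightarrow> y \<in> V \<Longrightarrow> (\<lambda>a. x a + \<alpha> * y a) \<in> V"
    and P: "\<And>x. x \<in> V \<Longrightarrow> 0 \<le> Re (sq M F x x)"
    and c: "c \<in> V" and d: "d \<in> V" and z: "Re (sq M F d d) = 0"
  shows "sq M F c d = 0"
proof -
  have "(cmod (sq M F c d))^2 \<le> Re (sq M F c c) * Re (sq M F d d)"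
    by (rule cs_gen[OF H V P c d])
  then have "(cmod (sq M F c d))^2 \<le> 0" using z by simp
  then have "(cmod (sq M F c d))^2 = 0" by (meson antisym zero_le_power2)
  then show ?thesis by simp
qed




definition nrm2 :: "'a set \<Rightarrow> ('a \<Rightarrow> complex) \<Rightarrow> real" where
  "nrm2 F x = (\<Sum>a\<in>F. (cmod (x a))^2)"

lemma nrm2_nonneg: "0 \<le> nrm2 F x"
  by (simp add: nrm2_def sum_nonneg)

lemma nrm2_zero: assumes "finite F" "nrm2 F x = 0" "a \<in> F" shows "x a = 0"
proof -
  have "\<forall>a\<in>F. (cmod (x a))^2 = 0"
    using assms sum_nonneg_eq_0_iff[of F "\<lambda>a. (cmod (x a))^2"] unfolding nrm2_def by simp
  then show ?thesis using assms(3) by simp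
qed

lemma nrm2_scale: "nrm2 F (\<lambda>a. c * x a) = (cmod c)^2 * nrm2 F x"
  by (simp add: nrm2_def norm_mult power_mult_distrib sum_distrib_left)

lemma ip_cong: "(\<And>a. a \<in> F \<Longrightarrow> x a = x' a) \<Longrightarrow> (\<And>a. a \<in> F \<Longrightarrow> y a = y' a) \<Longrightarrow>
   ip F x y = ip F x' y'"
  by (simp add: ip_def)

lemma nrm2_cong: "(\<And>a. a \<in> F \<Longrightarrow> x a = x' a) \<Longrightarrow> nrm2 F x = nrm2 F x'"
  by (simp add: nrm2_def)

lemma ip_conj: "ip F y x = cnj (ip F x y)"
  by (simp add: ip_def mult.commute)

lemma ip_self: "ip F x x = complex_of_real (nrm2 F x)"
  by (simp add: ip_def nrm2_def cnj_mult_self)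

lemma ip_add_right: "ip F x (\<lambda>a. y a + \<alpha> * z a) = ip F x y + \<alpha> * ip F x z"
  by (simp add: ip_def algebra_simps sum.distrib sum_distrib_left)

lemma ip_diff_right: "ip F x (\<lambda>a. y a - z a) = ip F x y - ip F x z"
  by (simp add: ip_def algebra_simps sum_subtractf)

lemma ip_scale_right: "ip F x (\<lambda>a. \<alpha> * z a) = \<alpha> * ip F x z"
  by (simp add: ip_def algebra_simps sum_distrib_left)

lemma ip_scale_left: "ip F (\<lambda>a. \<alpha> * z a) x = cnj \<alpha> * ip F z x"
  by (simp add: ip_def algebra_simps sum_distrib_left)

lemma ip_sum_right: "ip F x (\<lambda>a. \<Sum>i\<in>I. f i * y i a) = (\<Sum>i\<in>I. f i * ip F x (y i))"
  unfolding ip_def by (simp add: sum_distrib_left mult_ac) (rule sum.swap)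

lemma ip_delta_left: assumes "finite F" "a \<in> F" shows "ip F (delta a) y = y a"
proof -
  have "ip F (delta a) y = (\<Sum>b\<in>F. if b = a then y b else 0)"
    unfolding ip_def by (rule sum.cong) (auto simp: delta_def)
  then show ?thesis using assms by simp
qed

lemma ip_delta_right: assumes "finite F" "a \<in> F" shows "ip F x (delta a) = cnj (x a)"
  using ip_delta_left[OF assms, of x] ip_conj[of F x "delta a"] by simp

definition fam :: "'a set \<Rightarrow> ('a \<Rightarrow> 'a \<Rightarrow> complex) \<Rightarrow> nat \<Rightarrow> (nat \<Rightarrow> 'a \<Rightarrow> complex) \<Rightarrow> (nat \<Rightarrow> real) \<Rightarrow> bool" where
  "fam F A m u l \<longleftrightarrow> (\<forall>i<m. \<forall>a. a \<notin> F \<longrightarrow> u i a = 0) \<and>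
     (\<forall>i<m. \<forall>j<m. ip F (u i) (u j) = (if i = j then 1 else 0)) \<and>
     (\<forall>i<m. \<forall>a\<in>F. mat_vec_on F A (u i) a = complex_of_real (l i) * u i a)"

definition ocomplete :: "'a set \<Rightarrow> nat \<Rightarrow> (nat \<Rightarrow> 'a \<Rightarrow> complex) \<Rightarrow> bool" where
  "ocomplete F m u \<longleftrightarrow> (\<forall>x. \<forall>a\<in>F. x a = (\<Sum>i<m. ip F (u i) x * u i a))"

lemma bessel_delta:
  assumes F: "finite F" and fm: "fam F A m u l" and a: "a \<in> F"
  shows "(\<Sum>i<m. (cmod (u i a))^2) \<le> 1"
proof -
  have on: "\<And>i j. i < m \<Longrightarrow> j < m \<Longrightarrow> ip F (u i) (u j) = (if i = j then 1 else 0)"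
    using fm unfolding fam_def by blast
  define y where "y = (\<lambda>b. delta a b - (\<Sum>i<m. cnj (u i a) * u i b))"
  have "ip F (u j) y = 0" if j: "j < m" for j
  proof -
    have "ip F (u j) y = cnj (u j a) - (\<Sum>i<m. cnj (u i a) * ip F (u j) (u i))"
      unfolding y_def ip_diff_right ip_sum_right ip_delta_right[OF F a] ..
    also have "(\<Sum>i<m. cnj (u i a) * ip F (u j) (u i)) = (\<Sum>i<m. if i = j then cnj (u j a) else 0)"
      by (rule sum.cong) (auto simp: on j)
    also have "\<dots> = cnj (u j a)" using j by simp
    finally show ?thesis by simp
  qed
  then have "ip F y y = ip F (delta a) y"
  proof -
    assume orth: "\<And>j. j < m \<Longrightarrow> ip F (u j) y = 0"
    have "ip F y y = ip F y (\<lambda>b. delta a b - (\<Sum>i<m. cnj (u i a) * u i b))"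
      by (simp only: y_def[symmetric])
    also have "\<dots> = ip F y (delta a) - (\<Sum>i<m. cnj (u i a) * ip F y (u i))"
      by (simp only: ip_diff_right ip_sum_right)
    also have "(\<Sum>i<m. cnj (u i a) * ip F y (u i)) = 0"
      using orth by (simp add: ip_conj[of F y])
    finally have "ip F y y = ip F y (delta a)" by simp
    then show ?thesis by (metis ip_conj)
  qed
  also have "\<dots> = y a" by (rule ip_delta_left[OF F a])
  also have "\<dots> = 1 - complex_of_real (\<Sum>i<m. (cmod (u i a))^2)"
    by (simp add: y_def delta_def cnj_mult_self)
  finally have "complex_of_real (nrm2 F y) = 1 - complex_of_real (\<Sum>i<m. (cmod (u i a))^2)"
    by (simp add: ip_self)
  then have "nrm2 F y = 1 - (\<Sum>i<m. (cmod (u i a))^2)"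
    by (metis of_real_1 of_real_diff of_real_eq_iff)
  then show ?thesis using nrm2_nonneg[of F y] by simp
qed

lemma fam_bound:
  assumes F: "finite F" and fm: "fam F A m u l"
  shows "m \<le> card F"
proof -
  have "\<And>i. i < m \<Longrightarrow> nrm2 F (u i) = 1"
  proof -
    fix i assume "i < m"
    then have "ip F (u i) (u i) = 1" using fm unfolding fam_def by auto
    then show "nrm2 F (u i) = 1" by (simp add: ip_self)
  qed
  then have "real m = (\<Sum>i<m. nrm2 F (u i))" by simp
  also have "\<dots> = (\<Sum>a\<in>F. \<Sum>i<m. (cmod (u i a))^2)"
    unfolding nrm2_def by (rule sum.swap)
  also have "\<dots> \<le> (\<Sum>a\<in>F. 1)"
    by (rule sum_mono) (rule bessel_delta[OF F fm])
  finally show ?thesis by simp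
qed




lemma sq_id: assumes F: "finite F" shows
  "sq (\<lambda>a b. (if a = b then c else 0) - A a b) F x y = c * ip F x y - sq A F x y"
proof -
  have "sq (\<lambda>a b. (if a = b then c else 0) - A a b) F x y
     = (\<Sum>a\<in>F. \<Sum>b\<in>F. cnj (x a) * y b * (if a = b then c else 0)) - sq A F x y"
    unfolding sq_def by (simp add: right_diff_distrib sum_subtractf)
  also have "(\<Sum>a\<in>F. \<Sum>b\<in>F. cnj (x a) * y b * (if a = b then c else 0)) = (\<Sum>a\<in>F. c * (cnj (x a) * y a))"
  proof (rule sum.cong[OF refl])
    fix a assume a: "a \<in> F"
    have "(\<Sum>b\<in>F. cnj (x a) * y b * (if a = b then c else 0)) = (\<Sum>b\<in>F. if a = b then cnj (x a) * y b * c else 0)"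
      by (rule sum.cong) auto
    also have "\<dots> = cnj (x a) * y a * c" using a F by simp
    finally show "(\<Sum>b\<in>F. cnj (x a) * y b * (if a = b then c else 0)) = c * (cnj (x a) * y a)"
      by (simp add: mult_ac)
  qed
  also have "\<dots> = c * ip F x y" by (simp add: ip_def sum_distrib_left)
  finally show ?thesis .
qed

lemma mv_id: assumes "finite F" "a \<in> F"
  shows "mat_vec_on F (\<lambda>a b. (if a = b then c else 0) - A a b) v a = c * v a - mat_vec_on F A v a"
proof -
  have "mat_vec_on F (\<lambda>a b. (if a = b then c else 0) - A a b) v a
      = (\<Sum>b\<in>F. if a = b then c * v b else 0) - mat_vec_on F A v a"
  proof -
    have "mat_vec_on F (\<lambda>a b. (if a = b then c else 0) - A a b) v a
        = (\<Sum>b\<in>F. (if a = b then c else 0) * v b) - mat_vec_on F A v a"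
      unfolding mat_vec_on_def by (simp add: left_diff_distrib sum_subtractf)
    also have "(\<Sum>b\<in>F. (if a = b then c else 0) * v b) = (\<Sum>b\<in>F. if a = b then c * v b else 0)"
      by (rule sum.cong) auto
    finally show ?thesis .
  qed
  then show ?thesis using assms by simp
qed

lemma cont_sq: "continuous_on UNIV (\<lambda>x. Re (sq A F x x))"
  unfolding sq_def by (intro continuous_intros continuous_on_product_coordinates)

lemma box_compact:
  shows "compact (Pi\<^sub>E UNIV (\<lambda>a. if a \<in> F then cball (0::complex) 1 else {0}))"
proof -
  have "compactin (product_topology (\<lambda>i. euclidean) UNIV) (Pi\<^sub>E UNIV (\<lambda>a. if a \<in> F then cball (0::complex) 1 else {0}))"
    by (subst compactin_PiE) auto
  then show ?thesis by (simp add: euclidean_product_topology)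
qed

lemma spectral_step:
  assumes F: "finite F" and H: "herm F A" and fm: "fam F A k u l"
    and x0s: "\<forall>a. a \<notin> F \<longrightarrow> x0 a = 0" and x0o: "\<forall>i<k. ip F (u i) x0 = 0"
    and a0: "a0 \<in> F" "x0 a0 \<noteq> 0"
  shows "\<exists>v lam. fam F A (Suc k) (u(k:=v)) (l(k:=lam))"
proof -
  define W where "W = {x. (\<forall>a. a \<notin> F \<longrightarrow> x a = 0) \<and> (\<forall>i<k. ip F (u i) x = 0)}"
  have Wc: "\<And>x y \<alpha>. x \<in> W \<Longrightarrow> y \<in> W \<Longrightarrow> (\<lambda>a. x a + \<alpha> * y a) \<in> W"
    by (auto simp: W_def ip_add_right)
  have Ws: "\<And>x c. x \<in> W \<Longrightarrow> (\<lambda>a. c * x a) \<in> W"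
    by (auto simp: W_def ip_scale_right)
  define S where "S = {x \<in> W. nrm2 F x = 1}"
  define box where "box = Pi\<^sub>E UNIV (\<lambda>a. if a \<in> F then cball (0::complex) 1 else {0})"
  have Sbox: "S \<subseteq> box"
  proof
    fix x assume x: "x \<in> S"
    have "x a \<in> (if a \<in> F then cball 0 1 else {0})" for a
    proof (cases "a \<in> F")
      case True
      have "(cmod (x a))^2 \<le> nrm2 F x"
        unfolding nrm2_def by (rule member_le_sum) (use True F in auto)
      then have "(cmod (x a))^2 \<le> 1" using x S_def by simp
      then have "cmod (x a) \<le> 1" by (simp add: abs_square_le_1)
      then show ?thesis using True by simp
    next
      case False
      then show ?thesis using x by (simp add: S_def W_def)
    qed
    then show "x \<in> box" unfolding box_def by (simp add: PiE_iff)
  qed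
  have "closed S"
  proof -
    have "S = {x. (\<forall>a. a \<notin> F \<longrightarrow> x a = 0) \<and> (\<forall>i<k. (\<Sum>a\<in>F. cnj (u i a) * x a) = 0) \<and> (\<Sum>a\<in>F. (cmod (x a))^2) = 1}"
      by (auto simp: S_def W_def ip_def nrm2_def)
    also have "closed \<dots>"
      by (intro closed_Collect_conj closed_Collect_all closed_Collect_imp closed_Collect_eq
          continuous_intros continuous_on_product_coordinates) auto
    finally show ?thesis .
  qed
  have "compact S"
  proof -
    have "compact (box \<inter> S)" unfolding box_def
      by (rule compact_Int_closed[OF box_compact \<open>closed S\<close>])
    moreover have "box \<inter> S = S" using Sbox by blast
    ultimately show ?thesis by simp
  qed
  have n0: "nrm2 F x0 > 0"
  proof -
    have "nrm2 F x0 \<noteq> 0" using nrm2_zero[OF F _ a0(1), of x0] a0(2) by auto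
    then show ?thesis using nrm2_nonneg[of F x0] by simp
  qed
  have "S \<noteq> {}"
  proof -
    define c where "c = complex_of_real (1 / sqrt (nrm2 F x0))"
    have "(\<lambda>a. c * x0 a) \<in> W" using Ws x0s x0o by (auto simp: W_def)
    moreover have "nrm2 F (\<lambda>a. c * x0 a) = 1"
    proof -
      have "nrm2 F (\<lambda>a. c * x0 a) = (cmod c)^2 * nrm2 F x0" by (rule nrm2_scale)
      also have "\<dots> = 1" using n0 by (simp add: c_def norm_divide power_divide)
      finally show ?thesis .
    qed
    ultimately show ?thesis unfolding S_def by blast
  qed
  obtain v where vS: "v \<in> S" and vmax: "\<And>y. y \<in> S \<Longrightarrow> Re (sq A F y y) \<le> Re (sq A F v v)"
    using continuous_attains_sup[OF \<open>compact S\<close> \<open>S \<noteq> {}\<close> continuous_on_subset[OF cont_sq[of A F]]]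
    by blast
  define lam where "lam = Re (sq A F v v)"
  have vW: "v \<in> W" and nv: "nrm2 F v = 1" using vS by (auto simp: S_def)
  have bound: "Re (sq A F x x) \<le> lam * nrm2 F x" if x: "x \<in> W" for x
  proof (cases "nrm2 F x = 0")
    case True
    then have "\<forall>a\<in>F. x a = 0" using nrm2_zero[OF F] by blast
    then have "sq A F x x = 0" by (simp add: sq_def)
    then show ?thesis using True by simp
  next
    case False
    then have n: "nrm2 F x > 0" using nrm2_nonneg[of F x] by simp
    define c where "c = complex_of_real (1 / sqrt (nrm2 F x))"
    have "nrm2 F (\<lambda>a. c * x a) = (cmod c)^2 * nrm2 F x" by (rule nrm2_scale)
    also have "\<dots> = 1" using n by (simp add: c_def norm_divide power_divide)
    finally have "(\<lambda>a. c * x a) \<in> S"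
      using Ws[OF x] by (simp add: S_def)
    then have le: "Re (sq A F (\<lambda>a. c * x a) (\<lambda>a. c * x a)) \<le> lam" using vmax lam_def by blast
    have "sq A F (\<lambda>a. c * x a) (\<lambda>a. c * x a) = (cnj c * c) * sq A F x x"
      by (simp add: sq_scale_left sq_scale_right)
    also have "cnj c * c = complex_of_real (1 / nrm2 F x)"
      unfolding cnj_mult_self using n by (simp add: c_def norm_divide power_divide)
    finally have "Re (sq A F x x) / nrm2 F x \<le> lam" using le by simp
    then show ?thesis using n by (simp add: field_simps)
  qed
  define M where "M = (\<lambda>a b. (if a = b then complex_of_real lam else 0) - A a b)"
  have HM: "herm F M" unfolding herm_def
  proof (intro ballI)
    fix a b assume "a \<in> F" "b \<in> F"
    then have "A a b = cnj (A b a)" using H unfolding herm_def by blast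
    then show "M a b = cnj (M b a)" unfolding M_def by simp
  qed
  have sqM: "\<And>x y. sq M F x y = complex_of_real lam * ip F x y - sq A F x y"
    unfolding M_def by (rule sq_id[OF F])
  have PM: "0 \<le> Re (sq M F x x)" if "x \<in> W" for x
    using bound[OF that] by (simp add: sqM ip_self)
  have z0: "Re (sq M F v v) = 0" using nv by (simp add: sqM ip_self lam_def)
  define z where "z = (\<lambda>a. if a \<in> F then complex_of_real lam * v a - mat_vec_on F A v a else 0)"
  have zW: "z \<in> W"
    unfolding W_def
  proof (intro CollectI conjI allI impI)
    fix a assume "a \<notin> F" then show "z a = 0" by (simp add: z_def)
  next
    fix i assume i: "i < k"
    have ev: "\<And>a. a \<in> F \<Longrightarrow> mat_vec_on F A (u i) a = complex_of_real (l i) * u i a"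
      using fm i unfolding fam_def by blast
    have vo: "ip F (u i) v = 0" using vW i by (simp add: W_def)
    have "ip F (u i) (mat_vec_on F A v) = sq A F (u i) v" by (simp add: sq_alt)
    also have "\<dots> = cnj (sq A F v (u i))" by (rule sq_herm[OF H])
    also have "sq A F v (u i) = ip F v (\<lambda>a. complex_of_real (l i) * u i a)"
      unfolding sq_alt by (rule ip_cong) (auto simp: ev)
    also have "\<dots> = complex_of_real (l i) * cnj (ip F (u i) v)"
      by (simp add: ip_scale_right ip_conj[of F v])
    finally have Av: "ip F (u i) (mat_vec_on F A v) = 0" using vo by simp
    have "ip F (u i) z = ip F (u i) (\<lambda>a. complex_of_real lam * v a - mat_vec_on F A v a)"
      by (rule ip_cong) (auto simp: z_def)
    also have "\<dots> = 0"
      by (simp add: ip_diff_right ip_scale_right[of F _ _ v, simplified] vo Av)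
    finally show "ip F (u i) z = 0" .
  qed
  have "sq M F z v = 0" by (rule kernel_gen[OF HM Wc PM zW vW z0])
  moreover have "sq M F z v = ip F z z"
    unfolding sq_alt by (rule ip_cong) (auto simp: z_def M_def mv_id[OF F])
  ultimately have "nrm2 F z = 0" by (simp add: ip_self)
  then have eig: "mat_vec_on F A v a = complex_of_real lam * v a" if "a \<in> F" for a
    using nrm2_zero[OF F _ that, of z] that by (simp add: z_def)
  have fm1: "\<forall>i<k. \<forall>a. a \<notin> F \<longrightarrow> u i a = 0" and fm2: "\<forall>i<k. \<forall>j<k. ip F (u i) (u j) = (if i = j then 1 else 0)"
    and fm3: "\<forall>i<k. \<forall>a\<in>F. mat_vec_on F A (u i) a = complex_of_real (l i) * u i a"
    using fm unfolding fam_def by blast+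
  have vo: "\<And>i. i < k \<Longrightarrow> ip F (u i) v = 0" using vW by (simp add: W_def)
  have vo': "\<And>i. i < k \<Longrightarrow> ip F v (u i) = 0" using vo ip_conj by (metis complex_cnj_zero)
  have vv: "ip F v v = 1" using nv by (simp add: ip_self)
  have "fam F A (Suc k) (u(k:=v)) (l(k:=lam))"
    unfolding fam_def
  proof (intro conjI allI impI ballI)
    fix i a assume "i < Suc k" "a \<notin> F"
    then show "(u(k := v)) i a = 0" using fm1 vW by (auto simp: W_def less_Suc_eq)
  next
    fix i j assume "i < Suc k" "j < Suc k"
    then show "ip F ((u(k := v)) i) ((u(k := v)) j) = (if i = j then 1 else 0)"
      using fm2 vo vo' vv by (auto simp: less_Suc_eq)
  next
    fix i a assume "i < Suc k" "a \<in> F"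
    then show "mat_vec_on F A ((u(k := v)) i) a = complex_of_real ((l(k := lam)) i) * (u(k := v)) i a"
      using fm3 eig by (auto simp: less_Suc_eq)
  qed
  then show ?thesis by blast
qed

lemma spectral_nostep:
  assumes F: "finite F" and fm: "fam F A k u l"
    and no: "\<not> (\<exists>x0 a0. (\<forall>a. a \<notin> F \<longrightarrow> x0 a = 0) \<and> (\<forall>i<k. ip F (u i) x0 = 0) \<and> a0 \<in> F \<and> x0 a0 \<noteq> 0)"
  shows "ocomplete F k u"
  unfolding ocomplete_def
proof (intro allI ballI)
  fix x a assume a: "a \<in> F"
  have on: "\<And>i j. i < k \<Longrightarrow> j < k \<Longrightarrow> ip F (u i) (u j) = (if i = j then 1 else 0)"
    using fm unfolding fam_def by blast
  define y where "y = (\<lambda>a. if a \<in> F then x a - (\<Sum>i<k. ip F (u i) x * u i a) else 0)"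
  have "ip F (u j) y = 0" if j: "j < k" for j
  proof -
    have "ip F (u j) y = ip F (u j) (\<lambda>a. x a - (\<Sum>i<k. ip F (u i) x * u i a))"
      by (rule ip_cong) (auto simp: y_def)
    also have "\<dots> = ip F (u j) x - (\<Sum>i<k. ip F (u i) x * ip F (u j) (u i))"
      by (simp only: ip_diff_right ip_sum_right)
    also have "(\<Sum>i<k. ip F (u i) x * ip F (u j) (u i)) = (\<Sum>i<k. if i = j then ip F (u j) x else 0)"
      by (rule sum.cong) (auto simp: on j)
    also have "\<dots> = ip F (u j) x" using j by simp
    finally show ?thesis by simp
  qed
  moreover have "\<forall>a. a \<notin> F \<longrightarrow> y a = 0" by (simp add: y_def)
  ultimately have "y a = 0" using no a by blast
  then show "x a = (\<Sum>i<k. ip F (u i) x * u i a)" using a by (simp add: y_def)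
qed

lemma spectral:
  assumes F: "finite F" and H: "herm F A"
  shows "\<exists>m u l. fam F A m u l \<and> ocomplete F m u"
proof -
  have "(\<exists>u l. fam F A k u l) \<or> (\<exists>m u l. fam F A m u l \<and> ocomplete F m u)" for k
  proof (induction k)
    case 0
    then show ?case by (simp add: fam_def)
  next
    case (Suc k)
    then show ?case
    proof
      assume "\<exists>u l. fam F A k u l"
      then obtain u l where fm: "fam F A k u l" by blast
      show ?case
      proof (cases "\<exists>x0 a0. (\<forall>a. a \<notin> F \<longrightarrow> x0 a = 0) \<and> (\<forall>i<k. ip F (u i) x0 = 0) \<and> a0 \<in> F \<and> x0 a0 \<noteq> 0")
        case True
        then obtain x0 a0 where "\<forall>a. a \<notin> F \<longrightarrow> x0 a = 0" "\<forall>i<k. ip F (u i) x0 = 0" "a0 \<in> F" "x0 a0 \<noteq> 0"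
          by blast
        from spectral_step[OF F H fm this] show ?thesis by blast
      next
        case False
        from spectral_nostep[OF F fm False] fm show ?thesis by blast
      qed
    qed blast
  qed
  from this[of "Suc (card F)"] show ?thesis
    using fam_bound[OF F] by fastforce
qed




lemma pd_psd: assumes "pos_def_kernel K" "finite S"
  shows "0 \<le> Re (sq K S c c)" "Im (sq K S c c) = 0"
  using assms unfolding pos_def_kernel_def qform_sq by auto

lemma pdi: "pos_def_kernel K \<Longrightarrow> finite F \<Longrightarrow> Im (qform K F c) = 0"
  unfolding pos_def_kernel_def by blast

lemma qform_two: assumes "x \<noteq> y" shows "qform K {x, y} c = cnj (c x) * c x * K x x + cnj (c x) * c y * K x y
      + (cnj (c y) * c x * K y x + cnj (c y) * c y * K y y)"
    using assms by (simp add: qform_def)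

lemma pd_herm1: assumes pd: "pos_def_kernel K" shows "K x y = cnj (K y x)"
proof (cases "x = y")
  case True
  have "Im (qform K {x} (delta x)) = 0" by (rule pdi[OF pd]) simp
  then have "Im (K x x) = 0" by (simp add: qform_def delta_def)
  then show ?thesis using True by (simp add: complex_eq_iff)
next
  case False
  have i1: "Im (qform K {x, y} (\<lambda>z. if z = x \<or> z = y then 1 else 0)) = 0"
    by (rule pdi[OF pd]) simp
  have i2: "Im (qform K {x, y} (\<lambda>z. if z = x then 1 else if z = y then \<i> else 0)) = 0"
    by (rule pdi[OF pd]) simp
  have ix: "Im (qform K {x} (delta x)) = 0" "Im (qform K {y} (delta y)) = 0"
    by (rule pdi[OF pd], simp)+
  then have ix': "Im (K x x) = 0" "Im (K y y) = 0" by (simp_all add: qform_def delta_def)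
  have a: "Im (K x y) + Im (K y x) = 0" using i1 False ix' unfolding qform_two[OF False] by simp
  have b: "Re (K x y) - Re (K y x) = 0" using i2 False ix' unfolding qform_two[OF False] by simp
  show ?thesis using a b by (simp add: complex_eq_iff)
qed

lemma pd_herm: "pos_def_kernel K \<Longrightarrow> herm F K"
  unfolding herm_def by (intro ballI) (rule pd_herm1)

lemma span_fun_ext: assumes "finite S" "{x. c x \<noteq> 0} \<subseteq> S"
  shows "span_fun K c y = (\<Sum>x\<in>S. c x * K y x)"
  unfolding span_fun_def by (rule sum.mono_neutral_left) (use assms in auto)

lemma sq_ext: assumes S: "finite S" and T: "T \<subseteq> S"
  and x: "\<And>a. a \<notin> T \<Longrightarrow> x a = 0" and y: "\<And>a. a \<notin> T \<Longrightarrow> y a = 0"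
  shows "sq M S x y = sq M T x y"
proof -
  have "sq M S x y = (\<Sum>a\<in>S. \<Sum>b\<in>T. cnj (x a) * y b * M a b)"
    unfolding sq_def by (rule sum.cong[OF refl], rule sum.mono_neutral_right) (use S T y in auto)
  also have "\<dots> = sq M T x y"
    unfolding sq_def by (rule sum.mono_neutral_right) (use S T x in auto)
  finally show ?thesis .
qed

lemma sq_span_right: assumes S: "finite S" and d: "{x. d x \<noteq> 0} \<subseteq> S"
  shows "sq K S c d = (\<Sum>a\<in>S. cnj (c a) * span_fun K d a)"
  unfolding sq_def span_fun_ext[OF S d] by (simp add: sum_distrib_left mult_ac)

lemma sq_span_left: assumes pd: "pos_def_kernel K" and S: "finite S" and d: "{x. d x \<noteq> 0} \<subseteq> S"
  shows "sq K S d c = (\<Sum>a\<in>S. c a * cnj (span_fun K d a))"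
proof -
  have "sq K S d c = cnj (sq K S c d)" by (rule sq_herm[OF pd_herm[OF pd]])
  also have "\<dots> = (\<Sum>a\<in>S. c a * cnj (span_fun K d a))"
    unfolding sq_span_right[OF S d] by simp
  finally show ?thesis .
qed

lemma fin_supp_finite: "fin_supp c \<Longrightarrow> finite {x. c x \<noteq> 0}"
  by (simp add: fin_supp_def)

lemma kernel_inj:
  assumes pd: "pos_def_kernel K" and dl: "\<forall>x. in_rkhs K (delta x)" and F: "finite F"
    and c0: "\<forall>a\<in>F. mat_vec_on F K c a = 0" and z: "z \<in> F"
  shows "c z = 0"
proof -
  define c' where "c' = (\<lambda>a. if a \<in> F then c a else 0)"
  have c'0: "\<And>a. a \<notin> F \<Longrightarrow> c' a = 0" by (simp add: c'_def)
  have "sq K F c' c' = ip F c' (mat_vec_on F K c')" by (rule sq_alt)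
  also have "\<dots> = ip F c' (\<lambda>_. 0)"
  proof (rule ip_cong)
    fix a assume "a \<in> F"
    have "mat_vec_on F K c' a = mat_vec_on F K c a"
      unfolding mat_vec_on_def by (rule sum.cong) (auto simp: c'_def)
    then show "mat_vec_on F K c' a = 0" using c0 \<open>a \<in> F\<close> by simp
  qed simp
  also have "\<dots> = 0" by (simp add: ip_def)
  finally have q0: "sq K F c' c' = 0" .
  obtain d where d: "approx_seq K d (delta z)" using dl unfolding in_rkhs_def by blast
  have lim: "(\<lambda>n. span_fun K (d n) b) \<longlonglongrightarrow> delta z b" for b
    using d unfolding approx_seq_def by blast
  have eq0: "(\<Sum>b\<in>F. c' b * cnj (span_fun K (d n) b)) = 0" for n
  proof -
    define S where "S = {x. d n x \<noteq> 0} \<union> F"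
    have S: "finite S" unfolding S_def using d F unfolding approx_seq_def fin_supp_def by auto
    have FS: "F \<subseteq> S" by (auto simp: S_def)
    have q0': "Re (sq K S c' c') = 0"
      using sq_ext[OF S FS c'0 c'0] q0 by simp
    have "sq K S (d n) c' = 0"
      by (rule kernel_gen[where V=UNIV, OF pd_herm[OF pd] _ _ _ _ q0']) (use pd_psd[OF pd S] in auto)
    moreover have "sq K S (d n) c' = (\<Sum>b\<in>S. c' b * cnj (span_fun K (d n) b))"
      by (rule sq_span_left[OF pd S]) (auto simp: S_def)
    moreover have "(\<Sum>b\<in>S. c' b * cnj (span_fun K (d n) b)) = (\<Sum>b\<in>F. c' b * cnj (span_fun K (d n) b))"
      by (rule sum.mono_neutral_right) (use S FS c'0 in auto)
    ultimately show ?thesis by simp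
  qed
  have "(\<lambda>n. \<Sum>b\<in>F. c' b * cnj (span_fun K (d n) b)) \<longlonglongrightarrow> (\<Sum>b\<in>F. c' b * cnj (delta z b))"
    by (intro tendsto_intros lim)
  then have "(\<Sum>b\<in>F. c' b * cnj (delta z b)) = 0"
    using eq0 by (simp add: LIMSEQ_const_iff)
  moreover have "(\<Sum>b\<in>F. c' b * cnj (delta z b)) = c' z"
  proof -
    have "(\<Sum>b\<in>F. c' b * cnj (delta z b)) = (\<Sum>b\<in>F. if b = z then c' b else 0)"
      by (rule sum.cong) (auto simp: delta_def)
    then show ?thesis using F z by simp
  qed
  ultimately have "c' z = 0" by simp
  then show ?thesis using z unfolding c'_def by simp
qed




lemma outer_mult:
  assumes F: "finite F" and fm: "fam F A m u l"
    and P: "\<forall>a\<in>F. \<forall>b\<in>F. P a b = (\<Sum>i<m. f i * u i a * cnj (u i b))"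
    and Q: "\<forall>a\<in>F. \<forall>b\<in>F. Q a b = (\<Sum>i<m. g i * u i a * cnj (u i b))"
    and a: "a \<in> F" and b: "b \<in> F"
  shows "mat_mult_on F P Q a b = (\<Sum>i<m. f i * g i * u i a * cnj (u i b))"
proof -
  have on: "\<And>i j. i < m \<Longrightarrow> j < m \<Longrightarrow> ip F (u i) (u j) = (if i = j then 1 else 0)"
    using fm unfolding fam_def by blast
  have "mat_mult_on F P Q a b = (\<Sum>z\<in>F. (\<Sum>i<m. f i * u i a * cnj (u i z)) * (\<Sum>j<m. g j * u j z * cnj (u j b)))"
    unfolding mat_mult_on_def by (rule sum.cong) (use P Q a b in auto)
  also have "\<dots> = (\<Sum>z\<in>F. \<Sum>i<m. \<Sum>j<m. (f i * u i a * g j * cnj (u j b)) * (cnj (u i z) * u j z))"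
    by (simp add: sum_product mult_ac)
  also have "\<dots> = (\<Sum>i<m. \<Sum>z\<in>F. \<Sum>j<m. (f i * u i a * g j * cnj (u j b)) * (cnj (u i z) * u j z))"
    by (rule sum.swap)
  also have "\<dots> = (\<Sum>i<m. \<Sum>j<m. \<Sum>z\<in>F. (f i * u i a * g j * cnj (u j b)) * (cnj (u i z) * u j z))"
    by (rule sum.cong[OF refl], rule sum.swap)
  also have "\<dots> = (\<Sum>i<m. \<Sum>j<m. (f i * u i a * g j * cnj (u j b)) * ip F (u i) (u j))"
    by (simp add: ip_def sum_distrib_left)
  also have "\<dots> = (\<Sum>i<m. \<Sum>j<m. if j = i then f i * u i a * g i * cnj (u i b) else 0)"
    by (rule sum.cong[OF refl], rule sum.cong[OF refl]) (auto simp: on)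
  also have "\<dots> = (\<Sum>i<m. f i * g i * u i a * cnj (u i b))"
    by (simp add: mult_ac)
  finally show ?thesis .
qed

lemma delta_expand:
  assumes F: "finite F" and cm: "ocomplete F m u" and a: "a \<in> F" and b: "b \<in> F"
  shows "delta b a = (\<Sum>i<m. cnj (u i b) * u i a)"
proof -
  have "delta b a = (\<Sum>i<m. ip F (u i) (delta b) * u i a)" using cm a unfolding ocomplete_def by blast
  then show ?thesis using ip_delta_right[OF F b] by simp
qed

lemma K_rep:
  assumes F: "finite F" and fm: "fam F K m u l" and cm: "ocomplete F m u" and a: "a \<in> F" and b: "b \<in> F"
  shows "K a b = (\<Sum>i<m. complex_of_real (l i) * u i a * cnj (u i b))"
proof -
  have ev: "\<And>i. i < m \<Longrightarrow> mat_vec_on F K (u i) a = complex_of_real (l i) * u i a"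
    using fm a unfolding fam_def by blast
  have "K a b = (\<Sum>z\<in>F. K a z * delta b z)"
  proof -
    have "(\<Sum>z\<in>F. K a z * delta b z) = (\<Sum>z\<in>F. if z = b then K a z else 0)"
      by (rule sum.cong) (auto simp: delta_def)
    then show ?thesis using F b by simp
  qed
  also have "\<dots> = (\<Sum>z\<in>F. K a z * (\<Sum>i<m. cnj (u i b) * u i z))"
    by (rule sum.cong) (auto simp: delta_expand[OF F cm _ b])
  also have "\<dots> = (\<Sum>i<m. cnj (u i b) * mat_vec_on F K (u i) a)"
    unfolding mat_vec_on_def by (simp add: sum_distrib_left mult_ac) (rule sum.swap)
  also have "\<dots> = (\<Sum>i<m. complex_of_real (l i) * u i a * cnj (u i b))"
    by (rule sum.cong) (auto simp: ev mult_ac)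
  finally show ?thesis .
qed

definition Pinv :: "('a \<Rightarrow> 'a \<Rightarrow> complex) \<Rightarrow> 'a set \<Rightarrow> ('a \<Rightarrow> 'a \<Rightarrow> complex) \<Rightarrow> bool" where
  "Pinv K F B \<longleftrightarrow> (\<forall>x y. (x \<notin> F \<or> y \<notin> F) \<longrightarrow> B x y = 0) \<and> psd_on F B \<and>
      (\<forall>x\<in>F. \<forall>y\<in>F. mat_mult_on F (mat_mult_on F B B) K x y = (if x = y then 1 else 0))"

lemma inv_sqrt_on_Pinv: "inv_sqrt_on K F = (THE B. Pinv K F B)"
  unfolding inv_sqrt_on_def Pinv_def ..

lemma Pinv_exists:
  assumes pd: "pos_def_kernel K" and dl: "\<forall>x. in_rkhs K (delta x)" and F: "finite F"
  shows "\<exists>B. Pinv K F B"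
proof -
  obtain m u l where fm: "fam F K m u l" and cm: "ocomplete F m u"
    using spectral[OF F pd_herm[OF pd]] by blast
  have ev: "\<And>i a. i < m \<Longrightarrow> a \<in> F \<Longrightarrow> mat_vec_on F K (u i) a = complex_of_real (l i) * u i a"
    and on: "\<And>i j. i < m \<Longrightarrow> j < m \<Longrightarrow> ip F (u i) (u j) = (if i = j then 1 else 0)"
    using fm unfolding fam_def by blast+
  have lpos: "l i > 0" if i: "i < m" for i
  proof -
    have "sq K F (u i) (u i) = ip F (u i) (\<lambda>a. complex_of_real (l i) * u i a)"
      unfolding sq_alt by (rule ip_cong) (auto simp: ev i)
    also have "\<dots> = complex_of_real (l i)" using on[OF i i] by (simp add: ip_scale_right)
    finally have sl: "sq K F (u i) (u i) = complex_of_real (l i)" .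
    then have "l i \<ge> 0" using pd_psd(1)[OF pd F, of "u i"] by simp
    moreover have "l i \<noteq> 0"
    proof
      assume l0: "l i = 0"
      have "\<forall>a\<in>F. mat_vec_on F K (u i) a = 0" using ev[OF i] l0 by simp
      then have "\<forall>z\<in>F. u i z = 0" using kernel_inj[OF pd dl F] by blast
      then have "ip F (u i) (u i) = 0" by (simp add: ip_def)
      then show False using on[OF i i] by simp
    qed
    ultimately show ?thesis by simp
  qed
  define \<mu> where "\<mu> = (\<lambda>i. complex_of_real (1 / sqrt (l i)))"
  define B where "B = (\<lambda>a b. if a \<in> F \<and> b \<in> F then (\<Sum>i<m. \<mu> i * u i a * cnj (u i b)) else 0)"
  have Brep: "\<forall>a\<in>F. \<forall>b\<in>F. B a b = (\<Sum>i<m. \<mu> i * u i a * cnj (u i b))"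
    by (simp add: B_def)
  have z: "\<forall>x y. (x \<notin> F \<or> y \<notin> F) \<longrightarrow> B x y = 0" by (simp add: B_def)
  have h: "\<forall>x\<in>F. \<forall>y\<in>F. B x y = cnj (B y x)"
    by (auto simp: B_def \<mu>_def mult_ac)
  have q: "qform B F c = complex_of_real (\<Sum>i<m. (1 / sqrt (l i)) * (cmod (ip F (u i) c))^2)" for c
  proof -
    have "qform B F c = (\<Sum>a\<in>F. \<Sum>b\<in>F. \<Sum>i<m. cnj (c a) * c b * (\<mu> i * u i a * cnj (u i b)))"
      unfolding qform_def by (rule sum.cong[OF refl], rule sum.cong[OF refl]) (simp add: B_def sum_distrib_left)
    also have "\<dots> = (\<Sum>i<m. \<Sum>a\<in>F. \<Sum>b\<in>F. cnj (c a) * c b * (\<mu> i * u i a * cnj (u i b)))"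
      by (subst sum.swap, rule sum.cong[OF refl], rule sum.swap)
    also have "\<dots> = (\<Sum>i<m. \<mu> i * (cnj (ip F (u i) c) * ip F (u i) c))"
      by (rule sum.cong[OF refl]) (simp add: ip_def sum_product sum_distrib_left mult_ac)
    also have "\<dots> = complex_of_real (\<Sum>i<m. (1 / sqrt (l i)) * (cmod (ip F (u i) c))^2)"
      by (simp add: cnj_mult_self \<mu>_def)
    finally show ?thesis .
  qed
  have psd: "psd_on F B" unfolding psd_on_def
  proof (intro conjI allI)
    show "\<forall>x\<in>F. \<forall>y\<in>F. B x y = cnj (B y x)" by (rule h)
  next
    fix c show "Im (qform B F c) = 0" unfolding q by simp
  next
    fix c have "0 \<le> (\<Sum>i<m. (1 / sqrt (l i)) * (cmod (ip F (u i) c))^2)"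
      by (rule sum_nonneg) (use lpos in \<open>auto intro!: mult_nonneg_nonneg simp: less_imp_le\<close>)
    then show "0 \<le> Re (qform B F c)" unfolding q by simp
  qed
  have BB: "\<forall>a\<in>F. \<forall>b\<in>F. mat_mult_on F B B a b = (\<Sum>i<m. \<mu> i * \<mu> i * u i a * cnj (u i b))"
    using outer_mult[OF F fm Brep Brep] by blast
  have Kr: "\<forall>a\<in>F. \<forall>b\<in>F. K a b = (\<Sum>i<m. complex_of_real (l i) * u i a * cnj (u i b))"
    using K_rep[OF F fm cm] by blast
  have "mat_mult_on F (mat_mult_on F B B) K x y = (if x = y then 1 else 0)" if x: "x \<in> F" and y: "y \<in> F" for x y
  proof -
    have "mat_mult_on F (mat_mult_on F B B) K x y = (\<Sum>i<m. \<mu> i * \<mu> i * complex_of_real (l i) * u i x * cnj (u i y))"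
      by (rule outer_mult[OF F fm BB Kr x y])
    also have "\<dots> = (\<Sum>i<m. cnj (u i y) * u i x)"
    proof (rule sum.cong[OF refl])
      fix i assume "i \<in> {..<m}"
      then have lp: "l i > 0" using lpos by simp
      have "\<mu> i * \<mu> i * complex_of_real (l i) = 1"
        using lp unfolding \<mu>_def
        by (simp flip: of_real_mult)
      then show "\<mu> i * \<mu> i * complex_of_real (l i) * u i x * cnj (u i y) = cnj (u i y) * u i x"
        by (simp add: mult_ac)
    qed
    also have "\<dots> = delta y x" by (rule delta_expand[OF F cm x y, symmetric])
    finally show ?thesis by (simp add: delta_def)
  qed
  then show ?thesis unfolding Pinv_def using z psd by blast
qed




lemma mm_assoc: "mat_mult_on F (mat_mult_on F X Y) Z a b = mat_mult_on F X (mat_mult_on F Y Z) a b"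
  unfolding mat_mult_on_def by (simp add: sum_distrib_left sum_distrib_right mult_ac) (rule sum.swap)

lemma mm_id_right:
  assumes F: "finite F" and I: "\<forall>a\<in>F. \<forall>b\<in>F. I a b = (if a = b then 1 else 0)" and b: "b \<in> F"
  shows "mat_mult_on F X I a b = X a b"
proof -
  have "mat_mult_on F X I a b = (\<Sum>z\<in>F. if z = b then X a z else 0)"
    unfolding mat_mult_on_def by (rule sum.cong) (use I b in auto)
  then show ?thesis using F b by simp
qed

lemma mm_id_left:
  assumes F: "finite F" and I: "\<forall>a\<in>F. \<forall>b\<in>F. I a b = (if a = b then 1 else 0)" and a: "a \<in> F"
  shows "mat_mult_on F I X a b = X a b"
proof -
  have "mat_mult_on F I X a b = (\<Sum>z\<in>F. if z = a then X z b else 0)"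
    unfolding mat_mult_on_def by (rule sum.cong) (use I a in auto)
  then show ?thesis using F a by simp
qed

lemma mm_herm_conj:
  assumes "herm F X" "herm F Y" "a \<in> F" "b \<in> F"
  shows "mat_mult_on F X Y a b = cnj (mat_mult_on F Y X b a)"
  unfolding mat_mult_on_def
proof (simp, rule sum.cong[OF refl])
  fix z assume "z \<in> F"
  then have "X a z = cnj (X z a)" "Y z b = cnj (Y b z)" using assms unfolding herm_def by blast+
  then show "X a z * Y z b = cnj (Y b z) * cnj (X z a)" by (simp add: mult.commute)
qed

lemma sq_delta_left: assumes "finite F" "a \<in> F" shows "sq M F (delta a) y = mat_vec_on F M y a"
  unfolding sq_alt by (rule ip_delta_left[OF assms])

lemma Pinv_unique:
  assumes F: "finite F" and HK: "herm F K" and P1: "Pinv K F B1" and P2: "Pinv K F B2"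
  shows "B1 = B2"
proof -
  have z1: "\<And>x y. x \<notin> F \<or> y \<notin> F \<Longrightarrow> B1 x y = 0" and ps1: "psd_on F B1"
    and i1: "\<forall>x\<in>F. \<forall>y\<in>F. mat_mult_on F (mat_mult_on F B1 B1) K x y = (if x = y then 1 else 0)"
    using P1 unfolding Pinv_def by blast+
  have z2: "\<And>x y. x \<notin> F \<or> y \<notin> F \<Longrightarrow> B2 x y = 0" and ps2: "psd_on F B2"
    and i2: "\<forall>x\<in>F. \<forall>y\<in>F. mat_mult_on F (mat_mult_on F B2 B2) K x y = (if x = y then 1 else 0)"
    using P2 unfolding Pinv_def by blast+
  have h1: "herm F B1" and h2: "herm F B2" using ps1 ps2 unfolding psd_on_def herm_def by blast+
  have p1: "\<And>c. 0 \<le> Re (sq B1 F c c)" and p2: "\<And>c. 0 \<le> Re (sq B2 F c c)"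
    using ps1 ps2 unfolding psd_on_def qform_sq by blast+
  define C1 where "C1 = mat_mult_on F B1 B1"
  define C2 where "C2 = mat_mult_on F B2 B2"
  have hC1: "herm F C1" unfolding herm_def C1_def using mm_herm_conj[OF h1 h1] by blast
  have hC2: "herm F C2" unfolding herm_def C2_def using mm_herm_conj[OF h2 h2] by blast
  have KC1: "\<forall>a\<in>F. \<forall>b\<in>F. mat_mult_on F K C1 a b = (if a = b then 1 else 0)"
  proof (intro ballI)
    fix a b assume ab: "a \<in> F" "b \<in> F"
    have "mat_mult_on F K C1 a b = cnj (mat_mult_on F C1 K b a)" by (rule mm_herm_conj[OF HK hC1 ab])
    then show "mat_mult_on F K C1 a b = (if a = b then 1 else 0)" using i1 ab unfolding C1_def by auto
  qed
  have C12: "C2 a b = C1 a b" if ab: "a \<in> F" "b \<in> F" for a b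
  proof -
    have "C2 a b = mat_mult_on F C2 (mat_mult_on F K C1) a b"
      by (rule mm_id_right[OF F KC1 ab(2), symmetric])
    also have "\<dots> = mat_mult_on F (mat_mult_on F C2 K) C1 a b" by (rule mm_assoc[symmetric])
    also have "\<dots> = C1 a b" by (rule mm_id_left[OF F _ ab(1)]) (use i2 in \<open>simp add: C2_def\<close>)
    finally show ?thesis .
  qed
  define D where "D = (\<lambda>a b. B1 a b - B2 a b)"
  have hD: "herm F D" unfolding herm_def
  proof (intro ballI)
    fix a b assume "a \<in> F" "b \<in> F"
    then have "B1 a b = cnj (B1 b a)" "B2 a b = cnj (B2 b a)" using h1 h2 unfolding herm_def by blast+
    then show "D a b = cnj (D b a)" by (simp add: D_def)
  qed
  have E: "mat_mult_on F B1 D a b + mat_mult_on F D B2 a b = 0" if ab: "a \<in> F" "b \<in> F" for a b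
  proof -
    have "mat_mult_on F B1 D a b + mat_mult_on F D B2 a b = C1 a b - C2 a b"
      unfolding mat_mult_on_def D_def C1_def C2_def
      by (simp add: algebra_simps sum_subtractf)
    then show ?thesis using C12[OF ab] by simp
  qed
  define col where "col = (\<lambda>b x. D x b)"
  define row where "row = (\<lambda>a x. cnj (D a x))"
  have T1: "(\<Sum>a\<in>F. \<Sum>b\<in>F. cnj (D a b) * mat_mult_on F B1 D a b) = (\<Sum>b\<in>F. sq B1 F (col b) (col b))"
    unfolding sq_def col_def mat_mult_on_def
    by (subst sum.swap) (simp add: sum_distrib_left mult_ac)
  have T2: "(\<Sum>a\<in>F. \<Sum>b\<in>F. cnj (D a b) * mat_mult_on F D B2 a b) = (\<Sum>a\<in>F. sq B2 F (row a) (row a))"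
    unfolding sq_def row_def mat_mult_on_def
    by (rule sum.cong[OF refl]) (simp add: sum_distrib_left mult_ac, rule sum.swap)
  have "(\<Sum>a\<in>F. \<Sum>b\<in>F. cnj (D a b) * (mat_mult_on F B1 D a b + mat_mult_on F D B2 a b)) = 0"
    using E by simp
  then have "(\<Sum>b\<in>F. sq B1 F (col b) (col b)) + (\<Sum>a\<in>F. sq B2 F (row a) (row a)) = 0"
    unfolding T1[symmetric] T2[symmetric] by (simp add: distrib_left sum.distrib)
  then have "(\<Sum>b\<in>F. Re (sq B1 F (col b) (col b))) + (\<Sum>a\<in>F. Re (sq B2 F (row a) (row a))) = 0"
    by (metis Re_sum plus_complex.sel(1) zero_complex.sel(1))
  moreover have "0 \<le> (\<Sum>b\<in>F. Re (sq B1 F (col b) (col b)))" "0 \<le> (\<Sum>a\<in>F. Re (sq B2 F (row a) (row a)))"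
    using p1 p2 by (simp_all add: sum_nonneg)
  ultimately have s1: "(\<Sum>b\<in>F. Re (sq B1 F (col b) (col b))) = 0" and s2: "(\<Sum>a\<in>F. Re (sq B2 F (row a) (row a))) = 0"
    by linarith+
  have c0: "Re (sq B1 F (col b) (col b)) = 0" if "b \<in> F" for b
    using s1 sum_nonneg_eq_0_iff[OF F, of "\<lambda>b. Re (sq B1 F (col b) (col b))"] p1 that by auto
  have r0: "Re (sq B2 F (row a) (row a)) = 0" if "a \<in> F" for a
    using s2 sum_nonneg_eq_0_iff[OF F, of "\<lambda>a. Re (sq B2 F (row a) (row a))"] p2 that by auto
  have BD: "mat_mult_on F B1 D a b = 0" if ab: "a \<in> F" "b \<in> F" for a b
  proof -
    have "sq B1 F (delta a) (col b) = 0"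
      by (rule kernel_gen[where V=UNIV, OF h1 _ _ _ _ c0[OF ab(2)]]) (use p1 in auto)
    then show ?thesis unfolding sq_delta_left[OF F ab(1)]
      by (simp add: mat_vec_on_def mat_mult_on_def col_def)
  qed
  have DB: "mat_mult_on F D B2 a b = 0" if ab: "a \<in> F" "b \<in> F" for a b
  proof -
    have "sq B2 F (delta b) (row a) = 0"
      by (rule kernel_gen[where V=UNIV, OF h2 _ _ _ _ r0[OF ab(1)]]) (use p2 in auto)
    then have "sq B2 F (row a) (delta b) = 0" using sq_herm[OF h2, of "row a" "delta b"] by simp
    moreover have "sq B2 F (row a) (delta b) = mat_mult_on F D B2 a b"
    proof -
      have "sq B2 F (row a) (delta b) = cnj (sq B2 F (delta b) (row a))" by (rule sq_herm[OF h2])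
      also have "\<dots> = cnj (mat_vec_on F B2 (row a) b)" by (simp add: sq_delta_left[OF F ab(2)])
      also have "\<dots> = mat_mult_on F D B2 a b"
        unfolding mat_vec_on_def mat_mult_on_def row_def
      proof (simp, rule sum.cong[OF refl])
        fix z assume "z \<in> F"
        then have "B2 z b = cnj (B2 b z)" using h2 ab unfolding herm_def by blast
        then show "cnj (B2 b z) * D a z = D a z * B2 z b" by (simp add: mult.commute)
      qed
      finally show ?thesis .
    qed
    ultimately show ?thesis by simp
  qed
  have B2D: "mat_mult_on F B2 D a b = 0" if ab: "a \<in> F" "b \<in> F" for a b
    using mm_herm_conj[OF h2 hD ab] DB[OF ab(2) ab(1)] by simp
  have DD: "mat_mult_on F D D a b = 0" if ab: "a \<in> F" "b \<in> F" for a b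
  proof -
    have "mat_mult_on F D D a b = mat_mult_on F B1 D a b - mat_mult_on F B2 D a b"
      unfolding mat_mult_on_def by (simp add: D_def left_diff_distrib sum_subtractf)
    then show ?thesis using BD[OF ab] B2D[OF ab] by simp
  qed
  have D0: "D z b = 0" if zb: "z \<in> F" "b \<in> F" for z b
  proof -
    have "mat_mult_on F D D b b = complex_of_real (\<Sum>z\<in>F. (cmod (D z b))^2)"
      unfolding mat_mult_on_def of_real_sum
    proof (rule sum.cong[OF refl])
      fix z assume "z \<in> F"
      then have "D b z = cnj (D z b)" using hD zb unfolding herm_def by blast
      then show "D b z * D z b = complex_of_real ((cmod (D z b))^2)" by (simp add: cnj_mult_self)
    qed
    then have "complex_of_real (\<Sum>z\<in>F. (cmod (D z b))^2) = 0" using DD[OF zb(2) zb(2)] by metis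
    then have "(\<Sum>z\<in>F. (cmod (D z b))^2) = 0" by (simp only: of_real_eq_0_iff)
    then have "(cmod (D z b))^2 = 0" using sum_nonneg_eq_0_iff[OF F, of "\<lambda>z. (cmod (D z b))^2"] zb by auto
    then show ?thesis by simp
  qed
  show ?thesis
  proof (intro ext)
    fix x y show "B1 x y = B2 x y"
    proof (cases "x \<in> F \<and> y \<in> F")
      case True then show ?thesis using D0[of x y] by (simp add: D_def)
    next
      case False then show ?thesis using z1 z2 by auto
    qed
  qed
qed

lemma inv_sqrt_Pinv:
  assumes pd: "pos_def_kernel K" and dl: "\<forall>x. in_rkhs K (delta x)" and F: "finite F"
  shows "Pinv K F (inv_sqrt_on K F)"
proof -
  have "\<exists>!B. Pinv K F B"
    using Pinv_exists[OF pd dl F] Pinv_unique[OF F pd_herm[OF pd]] by blast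
  then show ?thesis unfolding inv_sqrt_on_Pinv by (rule theI')
qed




definition Kinv :: "('a \<Rightarrow> 'a \<Rightarrow> complex) \<Rightarrow> 'a set \<Rightarrow> 'a \<Rightarrow> 'a \<Rightarrow> complex" where
  "Kinv K F = mat_mult_on F (inv_sqrt_on K F) (inv_sqrt_on K F)"

definition pr :: "('a \<Rightarrow> 'a \<Rightarrow> complex) \<Rightarrow> 'a set \<Rightarrow> ('a \<Rightarrow> complex) \<Rightarrow> 'a \<Rightarrow> complex" where
  "pr K F h = mat_vec_on F (Kinv K F) h"

definition Qf :: "('a \<Rightarrow> 'a \<Rightarrow> complex) \<Rightarrow> 'a set \<Rightarrow> ('a \<Rightarrow> complex) \<Rightarrow> real" where
  "Qf K F h = Re (ip F h (pr K F h))"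

lemma mv_assoc: "mat_vec_on F X (mat_vec_on F Y h) a = mat_vec_on F (mat_mult_on F X Y) h a"
  unfolding mat_vec_on_def mat_mult_on_def
  by (simp add: sum_distrib_left sum_distrib_right mult_ac) (rule sum.swap)

lemma mv_herm_adj: assumes "herm F M"
  shows "ip F (mat_vec_on F M x) y = ip F x (mat_vec_on F M y)"
proof -
  have "ip F (mat_vec_on F M x) y = cnj (ip F y (mat_vec_on F M x))" by (rule ip_conj)
  also have "\<dots> = cnj (sq M F y x)" by (simp add: sq_alt)
  also have "\<dots> = sq M F x y" using sq_herm[OF assms, of x y] by simp
  finally show ?thesis by (simp add: sq_alt)
qed

lemma span_norm2_ext: assumes S: "finite S" and c: "{x. c x \<noteq> 0} \<subseteq> S"
  shows "span_norm2 K c = Re (sq K S c c)"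
  unfolding span_norm2_def qform_sq
  by (subst sq_ext[OF S c]) auto

locale rk =
  fixes K :: "'a \<Rightarrow> 'a \<Rightarrow> complex"
  assumes pd: "pos_def_kernel K" and dl: "\<forall>x. in_rkhs K (delta x)"
begin

lemma HK: "herm F K" by (rule pd_herm[OF pd])

lemma Pv: "finite F \<Longrightarrow> Pinv K F (inv_sqrt_on K F)"
  by (rule inv_sqrt_Pinv[OF pd dl])

lemma B_zero: "finite F \<Longrightarrow> x \<notin> F \<or> y \<notin> F \<Longrightarrow> inv_sqrt_on K F x y = 0"
  using Pv unfolding Pinv_def by blast

lemma B_herm: "finite F \<Longrightarrow> herm F (inv_sqrt_on K F)"
  using Pv unfolding Pinv_def psd_on_def herm_def by blast

lemma Kinv_zero: "finite F \<Longrightarrow> x \<notin> F \<Longrightarrow> Kinv K F x y = 0"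
  unfolding Kinv_def mat_mult_on_def using B_zero by simp

lemma Kinv_herm: "finite F \<Longrightarrow> herm F (Kinv K F)"
  unfolding herm_def Kinv_def using mm_herm_conj[OF B_herm B_herm] by blast

lemma Kinv_K: "finite F \<Longrightarrow> \<forall>x\<in>F. \<forall>y\<in>F. mat_mult_on F (Kinv K F) K x y = (if x = y then 1 else 0)"
  using Pv unfolding Pinv_def Kinv_def by blast

lemma K_Kinv: assumes F: "finite F" shows "\<forall>x\<in>F. \<forall>y\<in>F. mat_mult_on F K (Kinv K F) x y = (if x = y then 1 else 0)"
proof (intro ballI)
  fix x y assume xy: "x \<in> F" "y \<in> F"
  have "mat_mult_on F K (Kinv K F) x y = cnj (mat_mult_on F (Kinv K F) K y x)"
    by (rule mm_herm_conj[OF HK Kinv_herm[OF F] xy])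
  then show "mat_mult_on F K (Kinv K F) x y = (if x = y then 1 else 0)" using Kinv_K[OF F] xy by auto
qed

lemma pr_zero: "finite F \<Longrightarrow> x \<notin> F \<Longrightarrow> pr K F h x = 0"
  unfolding pr_def mat_vec_on_def using Kinv_zero by simp

lemma pr_supp: "finite F \<Longrightarrow> {x. pr K F h x \<noteq> 0} \<subseteq> F"
  using pr_zero by blast

lemma pr_fin: "finite F \<Longrightarrow> fin_supp (pr K F h)"
  unfolding fin_supp_def using pr_supp finite_subset by blast

lemma pr_cong: "(\<And>x. x \<in> F \<Longrightarrow> h x = h' x) \<Longrightarrow> pr K F h = pr K F h'"
  unfolding pr_def mat_vec_on_def by (intro ext sum.cong) auto

lemma pr_diff: "pr K F (\<lambda>x. h1 x - h2 x) = (\<lambda>x. pr K F h1 x - pr K F h2 x)"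
  unfolding pr_def mat_vec_on_def by (intro ext) (simp add: right_diff_distrib sum_subtractf)

lemma span_fun_mv: assumes F: "finite F" and c: "{x. c x \<noteq> 0} \<subseteq> F"
  shows "span_fun K c y = mat_vec_on F K c y"
  unfolding span_fun_ext[OF F c] mat_vec_on_def by (simp add: mult.commute)

lemma span_pr: assumes F: "finite F" and y: "y \<in> F"
  shows "span_fun K (pr K F h) y = h y"
proof -
  have "span_fun K (pr K F h) y = mat_vec_on F K (pr K F h) y"
    by (rule span_fun_mv[OF F pr_supp[OF F]])
  also have "\<dots> = mat_vec_on F K (mat_vec_on F (Kinv K F) h) y" by (simp add: pr_def)
  also have "\<dots> = mat_vec_on F (mat_mult_on F K (Kinv K F)) h y" by (rule mv_assoc)
  also have "\<dots> = (\<Sum>z\<in>F. if z = y then h z else 0)"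
    unfolding mat_vec_on_def by (rule sum.cong) (use K_Kinv[OF F] y in auto)
  also have "\<dots> = h y" using F y by simp
  finally show ?thesis .
qed

lemma pr_span: assumes F: "finite F" and c: "{x. c x \<noteq> 0} \<subseteq> F"
  shows "pr K F (span_fun K c) = c"
proof
  fix x show "pr K F (span_fun K c) x = c x"
  proof (cases "x \<in> F")
    case False then show ?thesis using pr_zero[OF F] c by auto
  next
    case True
    have sm: "span_fun K c = mat_vec_on F K c" by (rule ext, rule span_fun_mv[OF F c])
    have "pr K F (span_fun K c) x = mat_vec_on F (Kinv K F) (mat_vec_on F K c) x"
      unfolding pr_def sm ..
    also have "\<dots> = mat_vec_on F (mat_mult_on F (Kinv K F) K) c x" by (rule mv_assoc)
    also have "\<dots> = (\<Sum>z\<in>F. if z = x then c z else 0)"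
      unfolding mat_vec_on_def by (rule sum.cong) (use Kinv_K[OF F] True in auto)
    also have "\<dots> = c x" using F True by simp
    finally show ?thesis .
  qed
qed

lemma N_pr: assumes F: "finite F" shows "span_norm2 K (pr K F h) = Qf K F h"
proof -
  have "span_norm2 K (pr K F h) = Re (sq K F (pr K F h) (pr K F h))"
    by (rule span_norm2_ext[OF F pr_supp[OF F]])
  also have "sq K F (pr K F h) (pr K F h) = ip F (pr K F h) h"
    unfolding sq_alt
    by (rule ip_cong) (auto simp: span_fun_mv[OF F pr_supp[OF F], symmetric] span_pr[OF F])
  also have "\<dots> = cnj (ip F h (pr K F h))" by (rule ip_conj)
  finally show ?thesis by (simp add: Qf_def)
qed

lemma Qf_nonneg: "finite F \<Longrightarrow> 0 \<le> Qf K F h"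
  using N_pr[of F h] pd_psd(1)[OF pd] span_norm2_ext[OF _ pr_supp] by metis

lemma l2_Qf: assumes F: "finite F"
  shows "(l2_norm_on F (mat_vec_on F (inv_sqrt_on K F) h))^2 = Qf K F h"
proof -
  let ?B = "inv_sqrt_on K F"
  let ?v = "mat_vec_on F ?B h"
  have "(l2_norm_on F ?v)^2 = nrm2 F ?v"
    unfolding l2_norm_on_def nrm2_def by (simp add: sum_nonneg)
  also have "complex_of_real (nrm2 F ?v) = ip F ?v ?v" by (simp add: ip_self)
  also have "\<dots> = ip F h (mat_vec_on F ?B ?v)" by (rule mv_herm_adj[OF B_herm[OF F]])
  also have "\<dots> = ip F h (pr K F h)"
    unfolding pr_def Kinv_def by (rule ip_cong) (auto simp: mv_assoc)
  finally show ?thesis unfolding Qf_def by (metis Re_complex_of_real)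
qed

end



context rk begin

abbreviation N where "N \<equiv> span_norm2 K"

lemma supp_fin: "fin_supp c \<Longrightarrow> finite {x. c x \<noteq> 0}" by (simp add: fin_supp_def)

lemma fin_diff: "fin_supp c \<Longrightarrow> fin_supp d \<Longrightarrow> fin_supp (\<lambda>x. c x - d x)"
  unfolding fin_supp_def by (rule finite_subset[of _ "{x. c x \<noteq> 0} \<union> {x. d x \<noteq> 0}"]) auto

lemma fin_add: "fin_supp c \<Longrightarrow> fin_supp d \<Longrightarrow> fin_supp (\<lambda>x. c x + d x)"
  unfolding fin_supp_def by (rule finite_subset[of _ "{x. c x \<noteq> 0} \<union> {x. d x \<noteq> 0}"]) auto

lemma span_fun_diff: assumes c: "fin_supp c" and d: "fin_supp d"
  shows "span_fun K (\<lambda>x. c x - d x) y = span_fun K c y - span_fun K d y"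
proof -
  define S where "S = {x. c x \<noteq> 0} \<union> {x. d x \<noteq> 0}"
  have S: "finite S" using c d by (simp add: S_def fin_supp_def)
  have "span_fun K (\<lambda>x. c x - d x) y = (\<Sum>x\<in>S. (c x - d x) * K y x)"
    by (rule span_fun_ext[OF S]) (auto simp: S_def)
  moreover have "span_fun K c y = (\<Sum>x\<in>S. c x * K y x)"
    by (rule span_fun_ext[OF S]) (auto simp: S_def)
  moreover have "span_fun K d y = (\<Sum>x\<in>S. d x * K y x)"
    by (rule span_fun_ext[OF S]) (auto simp: S_def)
  ultimately show ?thesis by (simp add: left_diff_distrib sum_subtractf)
qed

lemma N_nonneg: "fin_supp c \<Longrightarrow> 0 \<le> N c"
  using span_norm2_ext[OF supp_fin order_refl] pd_psd(1)[OF pd supp_fin] by metis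

lemma N_sym: "N (\<lambda>x. c x - d x) = N (\<lambda>x. d x - c x)"
proof -
  have e: "{x. c x - d x \<noteq> 0} = {x. d x - c x \<noteq> 0}" by auto
  show ?thesis unfolding span_norm2_def qform_def e by (simp add: algebra_simps)
qed

lemma triangle: assumes c: "fin_supp c" and d: "fin_supp d"
  shows "sqrt (N (\<lambda>x. c x + d x)) \<le> sqrt (N c) + sqrt (N d)"
proof -
  define S where "S = {x. c x \<noteq> 0} \<union> {x. d x \<noteq> 0}"
  have S: "finite S" using c d by (simp add: S_def fin_supp_def)
  have Nc: "N c = Re (sq K S c c)" by (rule span_norm2_ext[OF S]) (auto simp: S_def)
  have Nd: "N d = Re (sq K S d d)" by (rule span_norm2_ext[OF S]) (auto simp: S_def)
  have Ncd: "N (\<lambda>x. c x + d x) = Re (sq K S (\<lambda>x. c x + d x) (\<lambda>x. c x + d x))"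
    by (rule span_norm2_ext[OF S]) (auto simp: S_def)
  have "sq K S (\<lambda>x. c x + d x) (\<lambda>x. c x + d x) = sq K S (\<lambda>x. c x + 1 * d x) (\<lambda>x. c x + 1 * d x)"
    by simp
  also have "\<dots> = sq K S c c + sq K S c d + (sq K S d c + sq K S d d)"
    by (simp only: sq_add_left sq_add_right) simp
  also have "sq K S d c = cnj (sq K S c d)" by (rule sq_herm[OF HK])
  finally have e: "N (\<lambda>x. c x + d x) = N c + N d + 2 * Re (sq K S c d)"
    unfolding Ncd Nc Nd by simp
  have cs: "(cmod (sq K S c d))^2 \<le> N c * N d"
    unfolding Nc Nd by (rule cs_gen[where V=UNIV, OF HK]) (use pd_psd(1)[OF pd S] in auto)
  have "Re (sq K S c d) \<le> cmod (sq K S c d)" by (rule complex_Re_le_cmod)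
  also have "\<dots> \<le> sqrt (N c * N d)" by (rule real_le_rsqrt[OF cs])
  also have "\<dots> = sqrt (N c) * sqrt (N d)" by (simp add: real_sqrt_mult)
  finally have "N (\<lambda>x. c x + d x) \<le> (sqrt (N c) + sqrt (N d))^2"
    unfolding e using N_nonneg[OF c] N_nonneg[OF d] by (simp add: power2_eq_square algebra_simps)
  then have "sqrt (N (\<lambda>x. c x + d x)) \<le> sqrt ((sqrt (N c) + sqrt (N d))^2)"
    by (rule real_sqrt_le_mono)
  also have "\<dots> = sqrt (N c) + sqrt (N d)" using N_nonneg[OF c] N_nonneg[OF d] by simp
  finally show ?thesis .
qed

lemma triangle2: assumes c: "fin_supp c" and d: "fin_supp d"
  shows "sqrt (N c) \<le> sqrt (N (\<lambda>x. c x - d x)) + sqrt (N d)"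
  using triangle[OF fin_diff[OF c d] d] by simp

lemma rev_triangle: assumes c: "fin_supp c" and d: "fin_supp d"
  shows "\<bar>sqrt (N c) - sqrt (N d)\<bar> \<le> sqrt (N (\<lambda>x. c x - d x))"
proof -
  have t1: "sqrt (N c) \<le> sqrt (N (\<lambda>x. c x - d x)) + sqrt (N d)" by (rule triangle2[OF c d])
  have t2: "sqrt (N d) \<le> sqrt (N (\<lambda>x. d x - c x)) + sqrt (N c)" by (rule triangle2[OF d c])
  have "N (\<lambda>x. d x - c x) = N (\<lambda>x. c x - d x)" by (rule N_sym)
  then show ?thesis using t1 t2 unfolding abs_le_iff by simp
qed

lemma cs_point: assumes d: "fin_supp d"
  shows "(cmod (span_fun K d y))^2 \<le> Re (K y y) * N d"
proof -
  define S where "S = {x. d x \<noteq> 0} \<union> {y}"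
  have S: "finite S" using d by (simp add: S_def fin_supp_def)
  have Nd: "N d = Re (sq K S d d)" by (rule span_norm2_ext[OF S]) (auto simp: S_def)
  have "sq K S (delta y) d = (\<Sum>a\<in>S. cnj (delta y a) * span_fun K d a)"
    by (rule sq_span_right[OF S]) (auto simp: S_def)
  also have "\<dots> = (\<Sum>a\<in>S. if a = y then span_fun K d a else 0)"
    by (rule sum.cong) (auto simp: delta_def)
  also have "\<dots> = span_fun K d y" using S by (simp add: S_def)
  finally have e1: "sq K S (delta y) d = span_fun K d y" .
  have "sq K S (delta y) (delta y) = sq K {y} (delta y) (delta y)"
    by (rule sq_ext[OF S]) (auto simp: S_def delta_def)
  also have "\<dots> = K y y" by (simp add: sq_def delta_def)
  finally have e2: "sq K S (delta y) (delta y) = K y y" .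
  have "(cmod (sq K S (delta y) d))^2 \<le> Re (sq K S (delta y) (delta y)) * Re (sq K S d d)"
    by (rule cs_gen[where V=UNIV, OF HK]) (use pd_psd(1)[OF pd S] in auto)
  then show ?thesis unfolding e1 e2 Nd .
qed

lemma proj: assumes F: "finite F" and c: "fin_supp c" and ch: "\<forall>x\<in>F. span_fun K c x = h x"
  shows "N (\<lambda>x. c x - pr K F h x) = N c - Qf K F h"
proof -
  define q where "q = pr K F h"
  define S where "S = {x. c x \<noteq> 0} \<union> F"
  have S: "finite S" using c F by (simp add: S_def fin_supp_def)
  have FS: "F \<subseteq> S" by (auto simp: S_def)
  have qS: "{x. q x \<noteq> 0} \<subseteq> S" using pr_supp[OF F] FS by (auto simp: q_def)
  have cS: "{x. c x \<noteq> 0} \<subseteq> S" by (auto simp: S_def)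
  have qz: "\<And>x. x \<notin> F \<Longrightarrow> q x = 0" using pr_zero[OF F] by (simp add: q_def)
  have N1: "N (\<lambda>x. c x - q x) = Re (sq K S (\<lambda>x. c x - q x) (\<lambda>x. c x - q x))"
  proof (rule span_norm2_ext[OF S], rule subsetI)
    fix x assume "x \<in> {x. c x - q x \<noteq> 0}"
    then have "c x \<noteq> 0 \<or> q x \<noteq> 0" by auto
    then show "x \<in> S" using qS cS by blast
  qed
  have Nc: "N c = Re (sq K S c c)" by (rule span_norm2_ext[OF S cS])
  have qc: "sq K S q c = ip F q h"
  proof -
    have "sq K S q c = (\<Sum>a\<in>S. cnj (q a) * span_fun K c a)" by (rule sq_span_right[OF S cS])
    also have "\<dots> = (\<Sum>a\<in>F. cnj (q a) * span_fun K c a)"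
      by (rule sum.mono_neutral_right[OF S FS]) (auto simp: qz)
    also have "\<dots> = ip F q h" unfolding ip_def by (rule sum.cong) (auto simp: ch)
    finally show ?thesis .
  qed
  have qq: "sq K S q q = ip F q h"
  proof -
    have "sq K S q q = (\<Sum>a\<in>S. cnj (q a) * span_fun K q a)" by (rule sq_span_right[OF S qS])
    also have "\<dots> = (\<Sum>a\<in>F. cnj (q a) * span_fun K q a)"
      by (rule sum.mono_neutral_right[OF S FS]) (auto simp: qz)
    also have "\<dots> = ip F q h" unfolding ip_def q_def by (rule sum.cong) (auto simp: span_pr[OF F])
    finally show ?thesis .
  qed
  have cq: "sq K S c q = cnj (ip F q h)" using sq_herm[OF HK, where y=c and x=q and F=S] qc by simp
  have "sq K S (\<lambda>x. c x - q x) (\<lambda>x. c x - q x) = sq K S c c - sq K S c q - (sq K S q c - sq K S q q)"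
    by (simp only: sq_diff_left sq_diff_right)
  then have "N (\<lambda>x. c x - q x) = N c - Re (ip F q h)"
    unfolding N1 Nc by (simp add: qc qq cq)
  moreover have "Qf K F h = Re (ip F q h)"
    unfolding Qf_def q_def by (subst ip_conj) simp
  ultimately show ?thesis by (simp add: q_def)
qed

lemma Q_le: assumes F: "finite F" and c: "fin_supp c" and ch: "\<forall>x\<in>F. span_fun K c x = h x"
  shows "Qf K F h \<le> N c"
  using proj[OF F c ch] N_nonneg[OF fin_diff[OF c pr_fin[OF F, of h]]] by simp

lemma Q_mono: assumes G: "finite G" and FG: "F \<subseteq> G"
  shows "Qf K F h \<le> Qf K G h"
proof -
  have F: "finite F" using G FG finite_subset by blast
  have "Qf K F h \<le> N (pr K G h)"
    by (rule Q_le[OF F pr_fin[OF G]]) (use FG span_pr[OF G] in auto)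
  then show ?thesis using N_pr[OF G] by simp
qed

lemma N_pr_span: assumes S: "finite S" and d: "fin_supp d"
  shows "N (pr K S (span_fun K d)) \<le> N d"
  using N_pr[OF S] Q_le[OF S d] by simp

lemma Qf_tendsto: assumes "\<And>x. (\<lambda>n. g n x) \<longlonglongrightarrow> h x"
  shows "(\<lambda>n. Qf K F (g n)) \<longlonglongrightarrow> Qf K F h"
  unfolding Qf_def ip_def pr_def mat_vec_on_def
  by (intro tendsto_intros assms)

end



context rk begin

lemma Kyy: "0 \<le> Re (K y y)"
proof -
  have "0 \<le> Re (qform K {y} (delta y))" using pd unfolding pos_def_kernel_def by blast
  then show ?thesis by (simp add: qform_def delta_def)
qed

lemma approx_main:
  assumes ap: "approx_seq K c h"
  shows "convergent (\<lambda>n. sqrt (N (c n)))"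
    and "\<And>F. finite F \<Longrightarrow> Qf K F h \<le> (lim (\<lambda>n. sqrt (N (c n))))^2"
    and "\<And>M. (\<And>F. finite F \<Longrightarrow> Qf K F h \<le> M) \<Longrightarrow> (lim (\<lambda>n. sqrt (N (c n))))^2 \<le> M"
proof -
  have fin: "\<And>n. fin_supp (c n)" and cau: "\<And>e. e > 0 \<Longrightarrow> \<exists>N0. \<forall>m\<ge>N0. \<forall>n\<ge>N0. N (\<lambda>x. c m x - c n x) < e"
    and pt: "\<And>y. (\<lambda>n. span_fun K (c n) y) \<longlonglongrightarrow> h y"
    using ap unfolding approx_seq_def by blast+
  define X where "X = (\<lambda>n. sqrt (N (c n)))"
  have "Cauchy X"
  proof (rule metric_CauchyI)
    fix e :: real assume e: "e > 0"
    obtain N0 where N0: "\<forall>m\<ge>N0. \<forall>n\<ge>N0. N (\<lambda>x. c m x - c n x) < e^2" using cau[of "e^2"] e by auto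
    show "\<exists>M. \<forall>m\<ge>M. \<forall>n\<ge>M. dist (X m) (X n) < e"
    proof (intro exI allI impI)
      fix m n assume "N0 \<le> m" "N0 \<le> n"
      then have "N (\<lambda>x. c m x - c n x) < e^2" using N0 by blast
      then have "sqrt (N (\<lambda>x. c m x - c n x)) < sqrt (e^2)" by (rule real_sqrt_less_mono)
      then have "sqrt (N (\<lambda>x. c m x - c n x)) < e" using e by simp
      moreover have "dist (X m) (X n) \<le> sqrt (N (\<lambda>x. c m x - c n x))"
        unfolding X_def dist_real_def by (rule rev_triangle[OF fin fin])
      ultimately show "dist (X m) (X n) < e" by simp
    qed
  qed
  then show conv: "convergent (\<lambda>n. sqrt (N (c n)))" unfolding X_def[symmetric] by (simp add: Cauchy_convergent_iff)
  define L where "L = lim (\<lambda>n. sqrt (N (c n)))"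
  have XL: "X \<longlonglongrightarrow> L" using conv unfolding X_def L_def by (simp add: convergent_LIMSEQ_iff)
  have L0: "0 \<le> L" by (rule LIMSEQ_le_const[OF XL]) (use N_nonneg[OF fin] in \<open>simp add: X_def\<close>)
  have X2: "(\<lambda>n. N (c n)) \<longlonglongrightarrow> L^2"
  proof -
    have "(\<lambda>n. (X n)^2) \<longlonglongrightarrow> L^2" by (intro tendsto_intros XL)
    moreover have "(X n)^2 = N (c n)" for n unfolding X_def using N_nonneg[OF fin] by simp
    ultimately show ?thesis by simp
  qed
  show "Qf K F h \<le> (lim (\<lambda>n. sqrt (N (c n))))^2" if F: "finite F" for F
  proof -
    have "(\<lambda>n. Qf K F (span_fun K (c n))) \<longlonglongrightarrow> Qf K F h" by (rule Qf_tendsto[OF pt])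
    moreover have "Qf K F (span_fun K (c n)) \<le> N (c n)" for n
      by (rule Q_le[OF F fin]) simp
    ultimately have "Qf K F h \<le> L^2" using X2 by (intro LIMSEQ_le) auto
    then show ?thesis by (simp add: L_def)
  qed
  show "(lim (\<lambda>n. sqrt (N (c n))))^2 \<le> M" if M: "\<And>F. finite F \<Longrightarrow> Qf K F h \<le> M" for M
  proof -
    have M0: "0 \<le> M" using M[of "{}"] Qf_nonneg[of "{}" h] by simp
    have "L \<le> sqrt M + e" if e: "e > 0" for e
    proof -
      obtain N0 where N0: "\<forall>m\<ge>N0. \<forall>n\<ge>N0. N (\<lambda>x. c m x - c n x) < e^2" using cau[of "e^2"] e by auto
      have "X n \<le> sqrt M + e" if n: "n \<ge> N0" for n
      proof -
        define S where "S = {x. c n x \<noteq> 0}"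
        have S: "finite S" using fin by (simp add: S_def fin_supp_def)
        have cn: "pr K S (span_fun K (c n)) = c n" by (rule pr_span[OF S]) (simp add: S_def)
        have le: "X n \<le> e + sqrt (Qf K S (span_fun K (c m)))" if m: "m \<ge> N0" for m
        proof -
          let ?d = "pr K S (span_fun K (c m))"
          have "X n \<le> sqrt (N (\<lambda>x. c n x - ?d x)) + sqrt (N ?d)"
            unfolding X_def by (rule triangle2[OF fin pr_fin[OF S]])
          also have "(\<lambda>x. c n x - ?d x) = pr K S (span_fun K (\<lambda>x. c n x - c m x))"
          proof -
            have "(\<lambda>x. c n x - ?d x) = pr K S (\<lambda>x. span_fun K (c n) x - span_fun K (c m) x)"
              by (subst pr_diff) (simp add: cn)
            also have "(\<lambda>x. span_fun K (c n) x - span_fun K (c m) x) = span_fun K (\<lambda>x. c n x - c m x)"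
              by (rule ext) (simp add: span_fun_diff[OF fin fin])
            finally show ?thesis .
          qed
          also have "N ?d = Qf K S (span_fun K (c m))" by (rule N_pr[OF S])
          finally have 1: "X n \<le> sqrt (N (pr K S (span_fun K (\<lambda>x. c n x - c m x)))) + sqrt (Qf K S (span_fun K (c m)))" .
          have "N (pr K S (span_fun K (\<lambda>x. c n x - c m x))) \<le> N (\<lambda>x. c n x - c m x)"
            by (rule N_pr_span[OF S fin_diff[OF fin fin]])
          also have "\<dots> < e^2" using N0 n m by blast
          finally have "sqrt (N (pr K S (span_fun K (\<lambda>x. c n x - c m x)))) < sqrt (e^2)"
            by (rule real_sqrt_less_mono)
          then have "sqrt (N (pr K S (span_fun K (\<lambda>x. c n x - c m x)))) < e" using e by simp
          then show ?thesis using 1 by simp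
        qed
        have "(\<lambda>m. e + sqrt (Qf K S (span_fun K (c m)))) \<longlonglongrightarrow> e + sqrt (Qf K S h)"
          by (intro tendsto_intros Qf_tendsto pt)
        then have "X n \<le> e + sqrt (Qf K S h)"
          by (rule LIMSEQ_le_const) (use le in blast)
        also have "\<dots> \<le> e + sqrt M" using M[OF S] by simp
        finally show ?thesis by simp
      qed
      then show ?thesis by (intro LIMSEQ_le_const2[OF XL]) blast
    qed
    then have "L \<le> sqrt M" by (rule field_le_epsilon)
    then have "L^2 \<le> (sqrt M)^2" using L0 by (rule power_mono)
    then show ?thesis using M0 by (simp add: L_def)
  qed
qed

lemma norm_eq:
  assumes "in_rkhs K h"
  shows "bdd_above ((\<lambda>F. Qf K F h) ` {F. finite F})"
    and "(rkhs_norm K h)^2 = (SUP F\<in>{F. finite F}. Qf K F h)"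
proof -
  define c where "c = (SOME c. approx_seq K c h)"
  have ap: "approx_seq K c h" using assms unfolding in_rkhs_def c_def by (rule someI_ex)
  have rn: "rkhs_norm K h = lim (\<lambda>n. sqrt (N (c n)))" by (simp add: rkhs_norm_def c_def)
  note A = approx_main[OF ap]
  show bdd: "bdd_above ((\<lambda>F. Qf K F h) ` {F. finite F})"
    using A(2) by (auto simp: bdd_above_def)
  have ne: "{F. finite F} \<noteq> ({} :: 'a set set)" by auto
  have "(SUP F\<in>{F. finite F}. Qf K F h) \<le> (rkhs_norm K h)^2"
    unfolding rn by (rule cSUP_least[OF ne]) (use A(2) in auto)
  moreover have "(rkhs_norm K h)^2 \<le> (SUP F\<in>{F. finite F}. Qf K F h)"
    unfolding rn by (rule A(3)) (rule cSUP_upper[OF _ bdd], simp)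
  ultimately show "(rkhs_norm K h)^2 = (SUP F\<in>{F. finite F}. Qf K F h)" by simp
qed

lemma backward:
  assumes bdd: "bdd_above ((\<lambda>F. Qf K F h) ` {F. finite F})"
  shows "in_rkhs K h"
proof -
  define M where "M = (SUP F\<in>{F. finite F}. Qf K F h)"
  have ne: "{F. finite F} \<noteq> ({} :: 'a set set)" by auto
  have QM: "\<And>F. finite F \<Longrightarrow> Qf K F h \<le> M" unfolding M_def by (rule cSUP_upper[OF _ bdd]) simp
  have "\<exists>F. finite F \<and> M - inverse (real (Suc n)) < Qf K F h" for n
  proof -
    have "M - inverse (real (Suc n)) < M" by simp
    then have "\<exists>F\<in>{F. finite F}. M - inverse (real (Suc n)) < Qf K F h"
      unfolding M_def by (subst (asm) less_cSUP_iff[OF ne bdd])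
    then show ?thesis by auto
  qed
  then obtain Fs where Fs: "\<And>n. finite (Fs n)" "\<And>n. M - inverse (real (Suc n)) < Qf K (Fs n) h"
    by metis
  define G where "G = (\<lambda>n. \<Union>k\<le>n. Fs k)"
  have G: "\<And>n. finite (G n)" unfolding G_def using Fs(1) by auto
  have Gmono: "\<And>n m. n \<le> m \<Longrightarrow> G n \<subseteq> G m" unfolding G_def by (intro UN_mono) auto
  have QG: "M - inverse (real (Suc n)) < Qf K (G n) h" for n
  proof -
    have "Qf K (Fs n) h \<le> Qf K (G n) h" by (rule Q_mono[OF G]) (auto simp: G_def)
    then show ?thesis using Fs(2)[of n] by simp
  qed
  define c where "c = (\<lambda>n. pr K (G n) h)"
  have fin: "\<And>n. fin_supp (c n)" unfolding c_def by (rule pr_fin[OF G])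
  have key: "N (\<lambda>x. c m x - c n x) < inverse (real (Suc n))" if nm: "n \<le> m" for n m
  proof -
    have "N (\<lambda>x. c m x - pr K (G n) h x) = N (c m) - Qf K (G n) h"
      by (rule proj[OF G fin]) (use Gmono[OF nm] span_pr[OF G] in \<open>auto simp: c_def\<close>)
    also have "N (c m) = Qf K (G m) h" unfolding c_def by (rule N_pr[OF G])
    finally have "N (\<lambda>x. c m x - c n x) = Qf K (G m) h - Qf K (G n) h" by (simp add: c_def)
    then show ?thesis using QM[OF G, of m] QG[of n] by simp
  qed
  have cauchy: "\<exists>N0. \<forall>m\<ge>N0. \<forall>n\<ge>N0. N (\<lambda>x. c m x - c n x) < e" if e: "e > 0" for e
  proof -
    obtain N0 where N0: "inverse (real (Suc N0)) < e" using reals_Archimedean[OF e] by auto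
    have "N (\<lambda>x. c m x - c n x) < e" if "m \<ge> N0" "n \<ge> N0" for m n
    proof (cases "n \<le> m")
      case True
      have "inverse (real (Suc n)) \<le> inverse (real (Suc N0))" using \<open>n \<ge> N0\<close> by (simp add: field_simps)
      then show ?thesis using key[OF True] N0 by linarith
    next
      case False
      have "inverse (real (Suc m)) \<le> inverse (real (Suc N0))" using \<open>m \<ge> N0\<close> by (simp add: field_simps)
      moreover have "N (\<lambda>x. c m x - c n x) = N (\<lambda>x. c n x - c m x)" by (rule N_sym)
      ultimately show ?thesis using key[of m n] False N0 by linarith
    qed
    then show ?thesis by blast
  qed
  have pt: "(\<lambda>n. span_fun K (c n) y) \<longlonglongrightarrow> h y" for y
  proof -
    define H where "H = (\<lambda>n. insert y (G n))"
    have H: "\<And>n. finite (H n)" using G by (simp add: H_def)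
    define c' where "c' = (\<lambda>n. pr K (H n) h)"
    have fin': "\<And>n. fin_supp (c' n)" unfolding c'_def by (rule pr_fin[OF H])
    have c'y: "span_fun K (c' n) y = h y" for n unfolding c'_def by (rule span_pr[OF H]) (simp add: H_def)
    define C where "C = Re (K y y)"
    have bnd: "norm (span_fun K (c n) y - h y) \<le> sqrt (C * inverse (real (Suc n)))" for n
    proof -
      have "N (\<lambda>x. c' n x - pr K (G n) h x) = N (c' n) - Qf K (G n) h"
        by (rule proj[OF G fin']) (use span_pr[OF H] in \<open>auto simp: c'_def H_def\<close>)
      also have "N (c' n) = Qf K (H n) h" unfolding c'_def by (rule N_pr[OF H])
      finally have "N (\<lambda>x. c' n x - c n x) = Qf K (H n) h - Qf K (G n) h" by (simp add: c_def)
      then have Nl: "N (\<lambda>x. c n x - c' n x) \<le> inverse (real (Suc n))"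
        using QM[OF H, of n] QG[of n] N_sym[of "c n" "c' n"] by simp
      have "span_fun K (c n) y - h y = span_fun K (\<lambda>x. c n x - c' n x) y"
        using span_fun_diff[OF fin fin'] c'y by simp
      then have "(cmod (span_fun K (c n) y - h y))^2 \<le> C * N (\<lambda>x. c n x - c' n x)"
        unfolding C_def using cs_point[OF fin_diff[OF fin fin']] by simp
      also have "\<dots> \<le> C * inverse (real (Suc n))"
        using Nl Kyy unfolding C_def by (rule mult_left_mono) 
      finally show ?thesis by (rule real_le_rsqrt)
    qed
    have "(\<lambda>n. sqrt (C * inverse (real (Suc n)))) \<longlonglongrightarrow> sqrt (C * 0)"
      by (intro tendsto_intros LIMSEQ_inverse_real_of_nat)
    then have g0: "(\<lambda>n. sqrt (C * inverse (real (Suc n)))) \<longlonglongrightarrow> 0" by simp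
    have "(\<lambda>n. span_fun K (c n) y - h y) \<longlonglongrightarrow> 0"
      by (rule Lim_null_comparison[OF _ g0]) (rule always_eventually, rule allI, rule bnd)
    then show ?thesis by (simp add: LIM_zero_iff)
  qed
  have "approx_seq K c h" unfolding approx_seq_def using fin cauchy pt by blast
  then show ?thesis unfolding in_rkhs_def by blast
qed

end



theorem corollary8p5:
  fixes K :: "'a \<Rightarrow> 'a \<Rightarrow> complex" and h :: "'a \<Rightarrow> complex"
  assumes "pos_def_kernel K"
    and "\<forall>x. in_rkhs K (delta x)"
  shows "(in_rkhs K h \<longleftrightarrow>
            bdd_above {l2_norm_on F (mat_vec_on F (inv_sqrt_on K F) h) | F. finite F})
       \<and> (in_rkhs K h \<longrightarrow>
            (rkhs_norm K h)\<^sup>2 =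
              (SUP F\<in>{F. finite F}. (l2_norm_on F (mat_vec_on F (inv_sqrt_on K F) h))\<^sup>2))"
proof -
  interpret r: rk K using assms by (simp add: rk_def)
  let ?l = "\<lambda>F. l2_norm_on F (mat_vec_on F (inv_sqrt_on K F) h)"
  have l2: "\<And>F. finite F \<Longrightarrow> (?l F)^2 = Qf K F h" by (rule r.l2_Qf)
  have l0: "\<And>F. 0 \<le> ?l F" by (simp add: l2_norm_on_def sum_nonneg)
  have bdd_iff: "bdd_above {?l F | F. finite F} \<longleftrightarrow> bdd_above ((\<lambda>F. Qf K F h) ` {F. finite F})"
  proof
    assume "bdd_above {?l F | F. finite F}"
    then obtain B where B: "\<And>F. finite F \<Longrightarrow> ?l F \<le> B" unfolding bdd_above_def by blast
    have "Qf K F h \<le> B^2" if "finite F" for F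
    proof -
      have "(?l F)^2 \<le> B^2" using B[OF that] l0[of F] by (rule power_mono)
      then show ?thesis using l2[OF that] by simp
    qed
    then show "bdd_above ((\<lambda>F. Qf K F h) ` {F. finite F})" unfolding bdd_above_def by blast
  next
    assume "bdd_above ((\<lambda>F. Qf K F h) ` {F. finite F})"
    then obtain B where B: "\<And>F. finite F \<Longrightarrow> Qf K F h \<le> B" unfolding bdd_above_def by blast
    have "?l F \<le> sqrt B" if "finite F" for F
      by (rule real_le_rsqrt) (use B[OF that] l2[OF that] in simp)
    then show "bdd_above {?l F | F. finite F}" unfolding bdd_above_def by blast
  qed
  have iff: "in_rkhs K h \<longleftrightarrow> bdd_above ((\<lambda>F. Qf K F h) ` {F. finite F})"
  proof
    assume "in_rkhs K h" then show "bdd_above ((\<lambda>F. Qf K F h) ` {F. finite F})" by (rule r.norm_eq(1))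
  next
    assume "bdd_above ((\<lambda>F. Qf K F h) ` {F. finite F})" then show "in_rkhs K h" by (rule r.backward)
  qed
  have sup: "(SUP F\<in>{F. finite F}. (?l F)^2) = (SUP F\<in>{F. finite F}. Qf K F h)"
    by (rule SUP_cong) (simp_all add: l2)
  show ?thesis
  proof (intro conjI impI)
    show "in_rkhs K h \<longleftrightarrow> bdd_above {?l F | F. finite F}" by (simp only: iff bdd_iff)
  next
    assume "in_rkhs K h"
    then show "(rkhs_norm K h)\<^sup>2 = (SUP F\<in>{F. finite F}. (?l F)\<^sup>2)" unfolding sup by (rule r.norm_eq(2))
  qed
qed


end
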